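(* Let $a(n)=|D_X(A_n)|$. Then as $n\to\infty$ through even values, $a(n)\sim\frac{\sqrt2}{4}\left(\sqrt{2+2\sqrt2}\right)^n$, and as $n\to\infty$ through odd values, $a(n)\sim\frac{\sqrt{\sqrt2-1}}{2}\left(\sqrt{2+2\sqrt2}\right)^n$.
   Context: For $n\ge1$ let $A_n=\{2,4,6,\dots\}\cap\{2,\dots,n-1\}$ (the even numbers strictly between $1$ and $n$; including or excluding $1$ and $n$ does not change the domain). For $A\subseteq[n]$, $D_X(A)$ is the set of all linear orders $q$ on $[n]$ such that for every triple $i<j<k$: if $j\in A$ then $i$ is not ranked last among $\{i,j,k\}$ in $q$, and if $j\notin A$ then $k$ is not ranked first among $\{i,j,k\}$ in $q$. $f\sim g$ means $f/g\to1$. *)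

theory Defs
  imports "HOL-Analysis.Analysis"
begin

text \<open>A linear order q on [n] = {1..n} is a relation with linear_order_on {1..n} q;
  (x,y) \<in> q means x is ranked at or before y (x is weakly preferred to y).\<close>

definition ranked_first :: "nat rel \<Rightarrow> nat \<Rightarrow> nat set \<Rightarrow> bool" where
  "ranked_first q x S \<longleftrightarrow> (\<forall>y\<in>S. (x, y) \<in> q)"

definition ranked_last :: "nat rel \<Rightarrow> nat \<Rightarrow> nat set \<Rightarrow> bool" where
  "ranked_last q x S \<longleftrightarrow> (\<forall>y\<in>S. (y, x) \<in> q)"

definition D_X :: "nat \<Rightarrow> nat set \<Rightarrow> nat rel set" where
  "D_X n A = {q. linear_order_on {1..n} q \<and>
     (\<forall>i j k. 1 \<le> i \<and> i < j \<and> j < k \<and> k \<le> n \<longrightarrow>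
        (j \<in> A \<longrightarrow> \<not> ranked_last q i {i, j, k}) \<and>
        (j \<notin> A \<longrightarrow> \<not> ranked_first q k {i, j, k}))}"

definition A_set :: "nat \<Rightarrow> nat set" where
  "A_set n = {j. even j \<and> 2 \<le> j \<and> j \<le> n - 1}"

definition a_count :: "nat \<Rightarrow> nat" where
  "a_count n = card (D_X n (A_set n))"

end

theory Submission
  imports Defs "HOL-Computational_Algebra.Formal_Power_Series"
begin


fun cat :: "nat \<Rightarrow> real" where
  "cat 0 = 1"
| "cat (Suc n) = (\<Sum>i\<le>n. cat i * cat (n - i))"

definition Cat :: "real fps" where "Cat = Abs_fps cat"

lemma Cat_eq: "Cat = 1 + fps_X * Cat^2"
proof (rule fps_ext)
  fix n show "fps_nth Cat n = fps_nth (1 + fps_X * Cat^2) n"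
  proof (cases n)
    case (Suc m)
    have "fps_nth (fps_X * Cat^2) n = fps_nth (Cat * Cat) m"
      using Suc by (simp add: power2_eq_square del: fps_mult_nth_0)
    also have "\<dots> = cat n" using Suc by (simp add: fps_mult_nth Cat_def atLeast0AtMost)
    finally show ?thesis using Suc by (simp add: Cat_def)
  qed (simp add: Cat_def)
qed

fun bb :: "nat \<Rightarrow> real" where
  "bb 0 = 1"
| "bb (Suc 0) = 2"
| "bb (Suc (Suc 0)) = 9"
| "bb (Suc (Suc (Suc m))) = 4 * bb (Suc (Suc m)) + 4 * bb (Suc m) - cat (Suc (Suc m))"

definition Bf :: "real fps" where "Bf = Abs_fps bb"

lemma cat1: "cat 1 = 1" by simp

lemma B_id: "(2*Bf - 1) * (1 - 4*fps_X - 4*fps_X^2) = 1 + 2*fps_X - 2*fps_X*Cat"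
proof -
  define G where "G = fps_const 2 * Bf - 1"
  have G2: "2*Bf - 1 = G" by (simp add: G_def numeral_fps_const)
  have L: "(2*Bf - 1) * (1 - 4*fps_X - 4*fps_X^2) = G - fps_X * (fps_const 4 * G) - fps_X * (fps_X * (fps_const 4 * G))"
    unfolding G2 by (simp add: algebra_simps power2_eq_square numeral_fps_const)
  have R: "1 + 2*fps_X - 2*fps_X*Cat = 1 + fps_X * (fps_const 2 - fps_const 2 * Cat)"
    by (simp add: algebra_simps numeral_fps_const)
  have Gn: "fps_nth G n = 2 * bb n - (if n = 0 then 1 else 0)" for n
    by (simp add: G_def Bf_def)
  show ?thesis unfolding L R
  proof (rule fps_ext)
    fix n
    show "fps_nth (G - fps_X * (fps_const 4 * G) - fps_X * (fps_X * (fps_const 4 * G))) n =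
          fps_nth (1 + fps_X * (fps_const 2 - fps_const 2 * Cat)) n"
    proof (cases n)
      case 0 then show ?thesis by (simp add: Gn)
    next
      case (Suc n1) note n1 = this
      show ?thesis
      proof (cases n1)
        case 0 then show ?thesis using n1 by (simp add: Gn Cat_def)
      next
        case (Suc n2) note n2 = this
        show ?thesis
        proof (cases n2)
          case 0 then show ?thesis using n1 n2 by (simp add: Gn Cat_def)
        next
          case (Suc n3)
          then show ?thesis using n1 n2 by (simp add: Gn Cat_def algebra_simps)
        qed
      qed
    qed
  qed
qed

definition Ap :: "real fps" where "Ap = Bf * (1 + 2*fps_X) - fps_X"

lemma Cat_rel: "fps_X * Cat^2 = Cat - 1"
  using Cat_eq by (metis add_diff_cancel_left')

lemma alg1: "(1 - 4*fps_X - 4*fps_X^2) * Cat = (1 + 2*fps_X - 2*fps_X*Cat) * (2 - (1 + 2*fps_X)*Cat)"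
proof -
  have "(1 + 2*fps_X - 2*fps_X*Cat) * (2 - (1 + 2*fps_X)*Cat) - (1 - 4*fps_X - 4*fps_X^2) * Cat
        = 2*(1+2*fps_X)*(fps_X*Cat^2 - Cat + 1)"
    by (simp add: algebra_simps power2_eq_square)
  also have "\<dots> = 0" by (simp add: Cat_rel)
  finally show ?thesis by simp
qed

lemma alg2: "(2*Bf - 1) * (2 - (1 + 2*fps_X)*Cat) = Cat"
proof -
  define K :: "real fps" where "K = 1 + 2*fps_X - 2*fps_X*Cat"
  have K0: "K \<noteq> 0"
  proof
    assume "K = 0"
    then have "fps_nth K 0 = 0" by simp
    moreover have "fps_nth K 0 = 1" by (simp add: K_def)
    ultimately show False by simp
  qed
  have "K * ((2*Bf - 1) * (2 - (1 + 2*fps_X)*Cat)) = (2*Bf - 1) * (K * (2 - (1 + 2*fps_X)*Cat))"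
    by (simp add: ac_simps)
  also have "\<dots> = (2*Bf - 1) * ((1 - 4*fps_X - 4*fps_X^2) * Cat)" by (simp add: alg1 K_def)
  also have "\<dots> = ((2*Bf - 1) * (1 - 4*fps_X - 4*fps_X^2)) * Cat" by (simp add: ac_simps)
  also have "\<dots> = K * Cat" unfolding B_id K_def by simp
  finally show ?thesis using K0 by simp
qed

lemma Ap_Cat: "Ap * Cat = 2*Bf - 1"
proof -
  have "2 * (Ap * Cat - (2*Bf - 1)) = - ((2*Bf - 1) * (2 - (1 + 2*fps_X)*Cat) - Cat)"
    by (simp add: Ap_def algebra_simps)
  also have "\<dots> = 0" by (simp add: alg2)
  finally have "(2::real fps) * (Ap * Cat - (2*Bf - 1)) = 0" .
  moreover have "(2::real fps) \<noteq> 0"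
  proof
    assume "(2::real fps) = 0"
    then have "fps_nth (2::real fps) 0 = 0" by simp
    then show False by (simp add: numeral_fps_const)
  qed
  ultimately have "Ap * Cat - (2*Bf - 1) = 0" using mult_eq_0_iff by blast
  then show ?thesis by simp
qed

definition uu :: "nat \<Rightarrow> nat \<Rightarrow> real" where
  "uu k d = fps_nth (Ap * Cat^k) (Suc d) - bb (Suc d)"

lemma Catk_0: "fps_nth (Cat^k) 0 = 1"
  by (simp add: fps_nth_power_0 Cat_def)

lemma Catk_1: "fps_nth (Cat^k) (Suc 0) = real k"
proof (induction k)
  case 0 then show ?case by simp
next
  case (Suc k)
  have "Cat^(Suc k) = Cat^k * Cat" by (simp add: power_Suc2)
  have c0: "fps_nth Cat 0 = 1" and c1: "fps_nth Cat (Suc 0) = 1" by (simp_all add: Cat_def)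
  show ?case unfolding \<open>Cat^(Suc k) = Cat^k * Cat\<close> using Suc by (simp add: Catk_0 c0 c1)
qed

lemma Catk_rec: "Cat^(Suc k) = Cat^k + fps_X * Cat^(Suc (Suc k))"
proof -
  have "Cat^(Suc k) = Cat^k * Cat" by (simp add: power_Suc2)
  also have "\<dots> = Cat^k * (1 + fps_X * Cat^2)" using Cat_eq by simp
  also have "\<dots> = Cat^k + fps_X * Cat^(Suc (Suc k))" by (simp add: algebra_simps power2_eq_square)
  finally show ?thesis .
qed

lemma Ap_alt: "Ap = Bf + fps_X * (2*Bf - 1)"
  by (simp add: Ap_def algebra_simps)

lemma Ap_0: "fps_nth Ap 0 = 1" by (simp add: Ap_alt Bf_def)
lemma Ap_Suc: "fps_nth Ap (Suc m) = bb (Suc m) + 2 * bb m - (if m = 0 then 1 else 0)"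
  by (simp add: Ap_alt Bf_def numeral_fps_const)

lemma uu_1: "uu 1 d = bb (Suc d)"
proof -
  have "fps_nth (Ap * Cat^1) (Suc d) = fps_nth (2*Bf - 1) (Suc d)" by (simp only: power_one_right Ap_Cat)
  also have "\<dots> = 2 * bb (Suc d)" by (simp add: Bf_def numeral_fps_const)
  finally show ?thesis unfolding uu_def by simp
qed

lemma uu_k0: "uu k 0 = real k + 1"
  by (simp add: uu_def Catk_0 Catk_1 Ap_0 Ap_Suc)

lemma uu_0: "uu 0 (Suc d) = 2 * uu 1 d"
proof -
  have "uu 0 (Suc d) = 2 * bb (Suc d)" by (simp add: uu_def Ap_Suc)
  then show ?thesis by (simp only: uu_1)
qed

lemma uu_rec: "uu (Suc k) (Suc d) = uu k (Suc d) + uu 1 d + uu (Suc (Suc k)) d"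
proof -
  have "Ap * Cat^(Suc k) = Ap * Cat^k + fps_X * (Ap * Cat^(Suc (Suc k)))"
    by (subst Catk_rec) (simp add: algebra_simps)
  then have "fps_nth (Ap * Cat^(Suc k)) (Suc (Suc d)) = fps_nth (Ap * Cat^k) (Suc (Suc d)) + fps_nth (Ap * Cat^(Suc (Suc k))) (Suc d)"
    by (simp only: fps_add_nth fps_X_mult_nth) simp
  then have "uu (Suc k) (Suc d) = uu k (Suc d) + bb (Suc d) + uu (Suc (Suc k)) d"
    unfolding uu_def by linarith
  then show ?thesis by (simp only: uu_1)
qed

definition FF :: "nat \<Rightarrow> nat \<Rightarrow> real" where
  "FF k N = (if N < 2*k then 1 else if even N then uu k (N div 2 - k) else 2 * uu k (N div 2 - k))"

lemma FF_even: "k \<le> j \<Longrightarrow> FF k (2*j) = uu k (j - k)"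
  by (simp add: FF_def)
lemma FF_odd: "k \<le> j \<Longrightarrow> FF k (Suc (2*j)) = 2 * uu k (j - k)"
  by (simp add: FF_def)
lemma FF_low: "N < 2*k \<Longrightarrow> FF k N = 1"
  by (simp add: FF_def)

lemma FF_R2: "FF (Suc k) (2 * Suc k) = FF k (2*k) + 1"
  using FF_even[of k k] FF_even[of "Suc k" "Suc k"] by (simp add: uu_k0)

lemma FF_R4: "FF 0 0 = 1" "N \<ge> 1 \<Longrightarrow> FF 0 N = 2 * FF 1 N"
proof -
  show "FF 0 0 = 1" using FF_even[of 0 0] by (simp add: uu_k0)
  assume "N \<ge> 1"
  show "FF 0 N = 2 * FF 1 N"
  proof (cases "even N")
    case True
    then obtain j where j: "N = 2*j" by blast
    with \<open>N \<ge> 1\<close> obtain d where d: "j = Suc d" by (cases j) auto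
    show ?thesis using FF_even[of 0 j] FF_even[of 1 j] j d by (simp add: uu_0)
  next
    case False
    then obtain j where j: "N = Suc (2*j)" by (metis oddE Suc_eq_plus1)
    show ?thesis
    proof (cases j)
      case 0 then show ?thesis using j FF_odd[of 0 0] FF_low[of 1 1] by (simp add: uu_k0)
    next
      case (Suc d) then show ?thesis using j FF_odd[of 0 j] FF_odd[of 1 j] by (simp add: uu_0)
    qed
  qed
qed

lemma FF_R3:
  assumes "2 * Suc k + 1 \<le> N"
  shows "FF (Suc k) N = FF k (N - 2) + FF 1 (N - 2 * Suc k) + FF (Suc (Suc k)) N"
proof (cases "even N")
  case True
  then obtain j where j: "N = 2*j" by blast
  with assms obtain d where d: "j = Suc (Suc k) + d" by (metis add_Suc_right le_Suc_ex nat_mult_le_cancel_disj one_add_one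
      Suc_le_eq le_add1 add_Suc le_less_Suc_eq mult_2 not_less_eq_eq numeral_2_eq_2 plus_1_eq_Suc)
  have e1: "N - 2 = 2 * (Suc k + d)" using j d by simp
  have e2: "N - 2 * Suc k = 2 * Suc d" using j d by simp
  show ?thesis unfolding e1 e2 using FF_even[of "Suc k" j] FF_even[of k "Suc k + d"] FF_even[of 1 "Suc d"]
      FF_even[of "Suc (Suc k)" j] j d uu_rec[of k d] by simp
next
  case False
  then obtain j where j: "N = Suc (2*j)" by (metis oddE Suc_eq_plus1)
  with assms have "Suc k \<le> j" by simp
  then obtain d where d: "j = Suc k + d" using le_Suc_ex by blast
  show ?thesis
  proof (cases d)
    case 0
    have e1: "N - 2 = Suc (2 * k)" using j d 0 by simp
    have e2: "N - 2 * Suc k = 1" using j d 0 by simp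
    show ?thesis unfolding e1 e2 using FF_odd[of "Suc k" j] FF_odd[of k k] FF_low[of 1 1]
      FF_low[of N "Suc (Suc k)"] j d 0 by (simp add: uu_k0)
  next
    case (Suc d')
    have e1: "N - 2 = Suc (2 * (k + Suc d'))" using j d Suc by simp
    have e2: "N - 2 * Suc k = Suc (2 * Suc d')" using j d Suc by simp
    show ?thesis unfolding e1 e2 using FF_odd[of "Suc k" j] FF_odd[of k "k + Suc d'"] FF_odd[of 1 "Suc d'"]
      FF_odd[of "Suc (Suc k)" j] j d Suc uu_rec[of k d'] by simp
  qed
qed



lemma lin_iff: "linear_order_on S q \<longleftrightarrow> q \<subseteq> S \<times> S \<and> (\<forall>x\<in>S. (x,x) \<in> q) \<and>
   (\<forall>a b c. (a,b) \<in> q \<longrightarrow> (b,c) \<in> q \<longrightarrow> (a,c) \<in> q) \<and>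
   (\<forall>a b. (a,b) \<in> q \<longrightarrow> (b,a) \<in> q \<longrightarrow> a = b) \<and>
   (\<forall>x\<in>S. \<forall>y\<in>S. x \<noteq> y \<longrightarrow> (x,y) \<in> q \<or> (y,x) \<in> q)"
  unfolding linear_order_on_def partial_order_on_def preorder_on_def refl_on_def total_on_def
    antisym_on_def trans_on_def by (simp only: ball_UNIV conj_assoc)

definition good :: "nat set \<Rightarrow> nat rel \<Rightarrow> bool" where
  "good S q \<longleftrightarrow> (\<forall>i\<in>S. \<forall>j\<in>S. \<forall>k\<in>S. i < j \<longrightarrow> j < k \<longrightarrow>
      (even j \<longrightarrow> (i,j) \<in> q \<or> (i,k) \<in> q) \<and> (odd j \<longrightarrow> (i,k) \<in> q \<or> (j,k) \<in> q))"

definition srt :: "nat set \<Rightarrow> nat rel \<Rightarrow> bool" where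
  "srt C q \<longleftrightarrow> (\<forall>i\<in>C. \<forall>j\<in>C. i < j \<longrightarrow> (i,j) \<in> q)"

definition Dg :: "nat set \<Rightarrow> nat set \<Rightarrow> nat rel set" where
  "Dg S C = {q. linear_order_on S q \<and> good S q \<and> srt C q}"

lemma srt_single: "srt {a} q" "srt {} q" by (auto simp: srt_def)

lemma Dg_single: "Dg S {a} = Dg S {}" by (simp add: Dg_def srt_single)

lemma linD:
  assumes "linear_order_on S q"
  shows lin_sub: "(a,b) \<in> q \<Longrightarrow> a \<in> S \<and> b \<in> S"
    and lin_refl: "x \<in> S \<Longrightarrow> (x,x) \<in> q"
    and lin_trans: "(a,b) \<in> q \<Longrightarrow> (b,c) \<in> q \<Longrightarrow> (a,c) \<in> q"
    and lin_antisym: "(a,b) \<in> q \<Longrightarrow> (b,a) \<in> q \<Longrightarrow> a = b"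
    and lin_total: "x \<in> S \<Longrightarrow> y \<in> S \<Longrightarrow> x \<noteq> y \<Longrightarrow> (x,y) \<notin> q \<Longrightarrow> (y,x) \<in> q"
proof -
  have h: "q \<subseteq> S \<times> S \<and> (\<forall>x\<in>S. (x,x) \<in> q) \<and>
   (\<forall>a b c. (a,b) \<in> q \<longrightarrow> (b,c) \<in> q \<longrightarrow> (a,c) \<in> q) \<and>
   (\<forall>a b. (a,b) \<in> q \<longrightarrow> (b,a) \<in> q \<longrightarrow> a = b) \<and>
   (\<forall>x\<in>S. \<forall>y\<in>S. x \<noteq> y \<longrightarrow> (x,y) \<in> q \<or> (y,x) \<in> q)"
    by (rule lin_iff[THEN iffD1, OF assms])
  note h1 = h[THEN conjunct1] and h2 = h[THEN conjunct2, THEN conjunct1]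
    and h3 = h[THEN conjunct2, THEN conjunct2, THEN conjunct1]
    and h4 = h[THEN conjunct2, THEN conjunct2, THEN conjunct2, THEN conjunct1]
    and h5 = h[THEN conjunct2, THEN conjunct2, THEN conjunct2, THEN conjunct2]
  show "(a,b) \<in> q \<Longrightarrow> a \<in> S \<and> b \<in> S" using h1 by auto
  show "x \<in> S \<Longrightarrow> (x,x) \<in> q" using h2 by auto
  show "(a,b) \<in> q \<Longrightarrow> (b,c) \<in> q \<Longrightarrow> (a,c) \<in> q" using h3 by blast
  show "(a,b) \<in> q \<Longrightarrow> (b,a) \<in> q \<Longrightarrow> a = b" using h4 by blast
  show "x \<in> S \<Longrightarrow> y \<in> S \<Longrightarrow> x \<noteq> y \<Longrightarrow> (x,y) \<notin> q \<Longrightarrow> (y,x) \<in> q" using h5 by blast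
qed

lemma linI:
  assumes "\<And>a b. (a,b) \<in> q \<Longrightarrow> a \<in> S \<and> b \<in> S"
    and "\<And>x. x \<in> S \<Longrightarrow> (x,x) \<in> q"
    and "\<And>a b c. (a,b) \<in> q \<Longrightarrow> (b,c) \<in> q \<Longrightarrow> (a,c) \<in> q"
    and "\<And>a b. (a,b) \<in> q \<Longrightarrow> (b,a) \<in> q \<Longrightarrow> a = b"
    and "\<And>x y. x \<in> S \<Longrightarrow> y \<in> S \<Longrightarrow> x \<noteq> y \<Longrightarrow> (x,y) \<in> q \<or> (y,x) \<in> q"
  shows "linear_order_on S q"
proof -
  have "q \<subseteq> S \<times> S" using assms(1) by auto
  moreover have "\<forall>x\<in>S. (x,x) \<in> q" using assms(2) by auto
  moreover have "\<forall>a b c. (a,b) \<in> q \<longrightarrow> (b,c) \<in> q \<longrightarrow> (a,c) \<in> q" using assms(3) by blast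
  moreover have "\<forall>a b. (a,b) \<in> q \<longrightarrow> (b,a) \<in> q \<longrightarrow> a = b" using assms(4) by blast
  moreover have "\<forall>x\<in>S. \<forall>y\<in>S. x \<noteq> y \<longrightarrow> (x,y) \<in> q \<or> (y,x) \<in> q" using assms(5) by blast
  ultimately show ?thesis unfolding lin_iff by (intro conjI) assumption+
qed

lemma Dg_finite: "finite S \<Longrightarrow> finite (Dg S C)"
proof -
  assume "finite S"
  have "Dg S C \<subseteq> Pow (S \<times> S)" unfolding Dg_def using lin_sub by fastforce
  moreover have "finite (Pow (S \<times> S))" using \<open>finite S\<close> by simp
  ultimately show ?thesis by (rule finite_subset)
qed


lemma top_exists_gen:
  assumes lin: "linear_order_on S q" and T: "finite T" "T \<noteq> {}" "T \<subseteq> S"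
  shows "\<exists>x\<in>T. \<forall>y\<in>T. (x,y) \<in> q"
  using T
proof (induction T rule: finite_ne_induct)
  case (singleton x) then show ?case using lin_refl[OF lin] by auto
next
  case (insert a F)
  then obtain t where t: "t \<in> F" "\<forall>y\<in>F. (t,y) \<in> q" by auto
  have aS: "a \<in> S" and tS: "t \<in> S" using insert t by auto
  have at: "a \<noteq> t" using insert t by auto
  show ?case
  proof (cases "(a,t) \<in> q")
    case True
    have "\<forall>y\<in>insert a F. (a,y) \<in> q"
    proof
      fix y assume "y \<in> insert a F"
      then show "(a,y) \<in> q"
      proof
        assume "y = a" then show ?thesis using lin_refl[OF lin aS] by simp
      next
        assume "y \<in> F" then show ?thesis using lin_trans[OF lin True] t by blast
      qed
    qed
    then show ?thesis by blast
  next
    case False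
    then have "(t,a) \<in> q" using lin_total[OF lin aS tS at] by blast
    then have "\<forall>y\<in>insert a F. (t,y) \<in> q" using t by auto
    then show ?thesis using t by blast
  qed
qed

lemma top_exists: "linear_order_on S q \<Longrightarrow> finite S \<Longrightarrow> S \<noteq> {} \<Longrightarrow> \<exists>x\<in>S. \<forall>y\<in>S. (x,y) \<in> q"
  using top_exists_gen by blast

definition ext :: "nat \<Rightarrow> nat set \<Rightarrow> nat rel \<Rightarrow> nat rel" where
  "ext x S q' = q' \<union> ({x} \<times> S)"

lemma restr_ext: "q' \<subseteq> (S - {x}) \<times> (S - {x}) \<Longrightarrow> Restr (ext x S q') (S - {x}) = q'"
  by (auto simp: ext_def)

lemma ext_restr:
  assumes lin: "linear_order_on S q" and xS: "x \<in> S" and top: "\<forall>y\<in>S. (x,y) \<in> q"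
  shows "ext x S (Restr q (S - {x})) = q"
proof
  show "ext x S (Restr q (S - {x})) \<subseteq> q" using top by (auto simp: ext_def)
  show "q \<subseteq> ext x S (Restr q (S - {x}))"
  proof
    fix p assume p: "p \<in> q"
    obtain a b where ab: "p = (a,b)" by (cases p)
    have abS: "a \<in> S" "b \<in> S" using lin_sub[OF lin] p ab by auto
    show "p \<in> ext x S (Restr q (S - {x}))"
    proof (cases "a = x")
      case True then show ?thesis using ab abS by (auto simp: ext_def)
    next
      case False
      have "b \<noteq> x"
      proof
        assume "b = x"
        then have "(x,a) \<in> q" using top abS by auto
        then show False using lin_antisym[OF lin] p ab \<open>b = x\<close> False by blast
      qed
      then show ?thesis using False ab abS p by (auto simp: ext_def)
    qed
  qed
qed

lemma lin_restr:
  assumes lin: "linear_order_on S q" and TS: "T \<subseteq> S"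
  shows "linear_order_on T (Restr q T)"
proof (rule linI)
  show "\<And>a b. (a,b) \<in> Restr q T \<Longrightarrow> a \<in> T \<and> b \<in> T" by auto
  show "\<And>x. x \<in> T \<Longrightarrow> (x,x) \<in> Restr q T" using lin_refl[OF lin] TS by auto
  show "\<And>a b c. (a,b) \<in> Restr q T \<Longrightarrow> (b,c) \<in> Restr q T \<Longrightarrow> (a,c) \<in> Restr q T"
    using lin_trans[OF lin] by auto
  show "\<And>a b. (a,b) \<in> Restr q T \<Longrightarrow> (b,a) \<in> Restr q T \<Longrightarrow> a = b"
    using lin_antisym[OF lin] by auto
  show "\<And>x y. x \<in> T \<Longrightarrow> y \<in> T \<Longrightarrow> x \<noteq> y \<Longrightarrow> (x,y) \<in> Restr q T \<or> (y,x) \<in> Restr q T"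
    using lin_total[OF lin] TS by blast
qed

lemma lin_ext:
  assumes lin: "linear_order_on (S - {x}) q'" and xS: "x \<in> S"
  shows "linear_order_on S (ext x S q')"
proof (rule linI)
  have sub: "\<And>a b. (a,b) \<in> q' \<Longrightarrow> a \<in> S - {x} \<and> b \<in> S - {x}" using lin_sub[OF lin] by blast
  show "\<And>a b. (a,b) \<in> ext x S q' \<Longrightarrow> a \<in> S \<and> b \<in> S" using sub xS by (auto simp: ext_def)
  show "\<And>y. y \<in> S \<Longrightarrow> (y,y) \<in> ext x S q'" using lin_refl[OF lin] by (auto simp: ext_def)
  show "\<And>a b c. (a,b) \<in> ext x S q' \<Longrightarrow> (b,c) \<in> ext x S q' \<Longrightarrow> (a,c) \<in> ext x S q'"
    using lin_trans[OF lin] sub by (auto simp: ext_def) (use sub in blast)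
  show "\<And>a b. (a,b) \<in> ext x S q' \<Longrightarrow> (b,a) \<in> ext x S q' \<Longrightarrow> a = b"
    using lin_antisym[OF lin] sub by (auto simp: ext_def)
  show "\<And>y z. y \<in> S \<Longrightarrow> z \<in> S \<Longrightarrow> y \<noteq> z \<Longrightarrow> (y,z) \<in> ext x S q' \<or> (z,y) \<in> ext x S q'"
    using lin_total[OF lin] by (auto simp: ext_def)
qed

lemma ext_Dg_iff:
  assumes lin: "linear_order_on (S - {x}) q'" and xS: "x \<in> S" and CS: "C \<subseteq> S"
  shows "ext x S q' \<in> Dg S C \<longleftrightarrow> q' \<in> Dg (S - {x}) (C - {x}) \<and> (x \<in> C \<longrightarrow> (\<forall>i\<in>C. \<not> i < x)) \<and>
     (\<forall>i\<in>S. \<forall>j\<in>S. i < j \<longrightarrow> j < x \<longrightarrow> even j \<and> (i,j) \<in> q') \<and>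
     (even x \<longrightarrow> (\<forall>i\<in>S. \<forall>k\<in>S. i < x \<longrightarrow> x < k \<longrightarrow> (i,k) \<in> q'))"
proof -
  have sub: "q' \<subseteq> (S - {x}) \<times> (S - {x})" using lin_sub[OF lin] by auto
  have mem: "(a,b) \<in> ext x S q' \<longleftrightarrow> (a,b) \<in> q' \<or> (a = x \<and> b \<in> S)" for a b
    by (auto simp: ext_def)
  have nx1: "(a,x) \<notin> q'" and nx2: "(x,a) \<notin> q'" for a using sub by auto
  have L: "linear_order_on S (ext x S q')" using lin_ext[OF lin xS] .
  have G: "good S (ext x S q') \<longleftrightarrow> good (S - {x}) q' \<and>
     (\<forall>i\<in>S. \<forall>j\<in>S. i < j \<longrightarrow> j < x \<longrightarrow> even j \<and> (i,j) \<in> q') \<and>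
     (even x \<longrightarrow> (\<forall>i\<in>S. \<forall>k\<in>S. i < x \<longrightarrow> x < k \<longrightarrow> (i,k) \<in> q'))"
  proof
    assume g: "good S (ext x S q')"
    have "good (S - {x}) q'"
      unfolding good_def
    proof (intro ballI impI conjI)
      fix i j k assume "i \<in> S - {x}" "j \<in> S - {x}" "k \<in> S - {x}" "i < j" "j < k"
      moreover note g[unfolded good_def, rule_format, of i j k]
      ultimately show "even j \<Longrightarrow> (i,j) \<in> q' \<or> (i,k) \<in> q'" "odd j \<Longrightarrow> (i,k) \<in> q' \<or> (j,k) \<in> q'"
        by (auto simp: mem)
    qed
    moreover have "\<forall>i\<in>S. \<forall>j\<in>S. i < j \<longrightarrow> j < x \<longrightarrow> even j \<and> (i,j) \<in> q'"
    proof (intro ballI impI)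
      fix i j assume "i \<in> S" "j \<in> S" "i < j" "j < x"
      moreover note g[unfolded good_def, rule_format, of i j x]
      ultimately show "even j \<and> (i,j) \<in> q'" using xS nx1 by (auto simp: mem)
    qed
    moreover have "even x \<longrightarrow> (\<forall>i\<in>S. \<forall>k\<in>S. i < x \<longrightarrow> x < k \<longrightarrow> (i,k) \<in> q')"
    proof (intro impI ballI)
      fix i k assume "even x" "i \<in> S" "k \<in> S" "i < x" "x < k"
      moreover note g[unfolded good_def, rule_format, of i x k]
      ultimately show "(i,k) \<in> q'" using xS nx1 by (auto simp: mem)
    qed
    ultimately show "good (S - {x}) q' \<and>
     (\<forall>i\<in>S. \<forall>j\<in>S. i < j \<longrightarrow> j < x \<longrightarrow> even j \<and> (i,j) \<in> q') \<and>
     (even x \<longrightarrow> (\<forall>i\<in>S. \<forall>k\<in>S. i < x \<longrightarrow> x < k \<longrightarrow> (i,k) \<in> q'))" by blast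
  next
    assume h: "good (S - {x}) q' \<and>
     (\<forall>i\<in>S. \<forall>j\<in>S. i < j \<longrightarrow> j < x \<longrightarrow> even j \<and> (i,j) \<in> q') \<and>
     (even x \<longrightarrow> (\<forall>i\<in>S. \<forall>k\<in>S. i < x \<longrightarrow> x < k \<longrightarrow> (i,k) \<in> q'))"
    show "good S (ext x S q')"
      unfolding good_def
    proof (intro ballI impI conjI)
      fix i j k assume ijk: "i \<in> S" "j \<in> S" "k \<in> S" "i < j" "j < k"
      show "even j \<Longrightarrow> (i,j) \<in> ext x S q' \<or> (i,k) \<in> ext x S q'"
      proof -
        assume ej: "even j"
        consider "i = x" | "j = x" | "k = x" | "i \<noteq> x" "j \<noteq> x" "k \<noteq> x" by blast
        then show ?thesis
        proof cases
          case 1 then show ?thesis using ijk by (auto simp: mem)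
        next
          case 2 then show ?thesis using ijk h ej by (auto simp: mem)
        next
          case 3 then show ?thesis using ijk h by (auto simp: mem)
        next
          case 4 then show ?thesis using ijk h ej unfolding good_def by (auto simp: mem)
        qed
      qed
      show "odd j \<Longrightarrow> (i,k) \<in> ext x S q' \<or> (j,k) \<in> ext x S q'"
      proof -
        assume oj: "odd j"
        consider "i = x" | "j = x" | "k = x" | "i \<noteq> x" "j \<noteq> x" "k \<noteq> x" by blast
        then show ?thesis
        proof cases
          case 1 then show ?thesis using ijk by (auto simp: mem)
        next
          case 2 then show ?thesis using ijk by (auto simp: mem)
        next
          case 3 then show ?thesis using ijk h oj by auto
        next
          case 4 then show ?thesis using ijk h oj unfolding good_def by (auto simp: mem)
        qed
      qed
    qed
  qed
  have Sr: "srt C (ext x S q') \<longleftrightarrow> srt (C - {x}) q' \<and> (x \<in> C \<longrightarrow> (\<forall>i\<in>C. \<not> i < x))"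
  proof
    assume a: "srt C (ext x S q')"
    show "srt (C - {x}) q' \<and> (x \<in> C \<longrightarrow> (\<forall>i\<in>C. \<not> i < x))"
      using a nx1 unfolding srt_def mem by blast
  next
    assume a: "srt (C - {x}) q' \<and> (x \<in> C \<longrightarrow> (\<forall>i\<in>C. \<not> i < x))"
    show "srt C (ext x S q')" unfolding srt_def
    proof (intro ballI impI)
      fix i j assume ij: "i \<in> C" "j \<in> C" "i < j"
      show "(i,j) \<in> ext x S q'"
      proof (cases "i = x")
        case True then show ?thesis using ij CS by (auto simp: mem)
      next
        case False
        have "j \<noteq> x" using a ij by auto
        then show ?thesis using a ij False unfolding srt_def by (auto simp: mem)
      qed
    qed
  qed
  show ?thesis unfolding Dg_def using L lin G Sr by auto
qed


definition TT :: "nat set \<Rightarrow> nat set \<Rightarrow> nat \<Rightarrow> nat" where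
  "TT S C x = card {q' \<in> Dg (S - {x}) (C - {x}). (x \<in> C \<longrightarrow> (\<forall>i\<in>C. \<not> i < x)) \<and>
     (\<forall>i\<in>S. \<forall>j\<in>S. i < j \<longrightarrow> j < x \<longrightarrow> even j \<and> (i,j) \<in> q') \<and>
     (even x \<longrightarrow> (\<forall>i\<in>S. \<forall>k\<in>S. i < x \<longrightarrow> x < k \<longrightarrow> (i,k) \<in> q'))}"

lemma count_top:
  assumes fin: "finite S" and xS: "x \<in> S" and CS: "C \<subseteq> S"
  shows "card {q \<in> Dg S C. \<forall>y\<in>S. (x,y) \<in> q} = TT S C x"
proof -
  define A where "A = {q' \<in> Dg (S - {x}) (C - {x}). (x \<in> C \<longrightarrow> (\<forall>i\<in>C. \<not> i < x)) \<and>
     (\<forall>i\<in>S. \<forall>j\<in>S. i < j \<longrightarrow> j < x \<longrightarrow> even j \<and> (i,j) \<in> q') \<and>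
     (even x \<longrightarrow> (\<forall>i\<in>S. \<forall>k\<in>S. i < x \<longrightarrow> x < k \<longrightarrow> (i,k) \<in> q'))}"
  have linA: "linear_order_on (S - {x}) q'" if "q' \<in> A" for q' using that by (simp add: A_def Dg_def)
  have inj: "inj_on (ext x S) A"
  proof (rule inj_onI)
    fix q1 q2 assume q: "q1 \<in> A" "q2 \<in> A" "ext x S q1 = ext x S q2"
    have "q1 \<subseteq> (S - {x}) \<times> (S - {x})" "q2 \<subseteq> (S - {x}) \<times> (S - {x})"
      using lin_sub[OF linA[OF q(1)]] lin_sub[OF linA[OF q(2)]] by auto
    then show "q1 = q2" using restr_ext q(3) by metis
  qed
  have img: "{q \<in> Dg S C. \<forall>y\<in>S. (x,y) \<in> q} = ext x S ` A"
  proof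
    show "{q \<in> Dg S C. \<forall>y\<in>S. (x,y) \<in> q} \<subseteq> ext x S ` A"
    proof
      fix q assume q: "q \<in> {q \<in> Dg S C. \<forall>y\<in>S. (x,y) \<in> q}"
      have lin: "linear_order_on S q" using q by (simp add: Dg_def)
      have top: "\<forall>y\<in>S. (x,y) \<in> q" using q by simp
      define q' where "q' = Restr q (S - {x})"
      have lq: "linear_order_on (S - {x}) q'" unfolding q'_def by (rule lin_restr[OF lin]) auto
      have eq: "ext x S q' = q" unfolding q'_def by (rule ext_restr[OF lin xS top])
      have "ext x S q' \<in> Dg S C" using eq q by simp
      then have "q' \<in> A" unfolding A_def using ext_Dg_iff[OF lq xS CS] by simp
      then show "q \<in> ext x S ` A" using eq by blast
    qed
    show "ext x S ` A \<subseteq> {q \<in> Dg S C. \<forall>y\<in>S. (x,y) \<in> q}"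
    proof
      fix q assume "q \<in> ext x S ` A"
      then obtain q' where q': "q' \<in> A" "q = ext x S q'" by blast
      have "ext x S q' \<in> Dg S C" using ext_Dg_iff[OF linA[OF q'(1)] xS CS] q'(1) unfolding A_def by simp
      moreover have "\<forall>y\<in>S. (x,y) \<in> ext x S q'" by (simp add: ext_def)
      ultimately show "q \<in> {q \<in> Dg S C. \<forall>y\<in>S. (x,y) \<in> q}" using q' by simp
    qed
  qed
  have "card (ext x S ` A) = card A" by (rule card_image[OF inj])
  moreover have "TT S C x = card A" unfolding TT_def A_def ..
  ultimately show ?thesis unfolding img by simp
qed

lemma card_Dg_sum:
  assumes fin: "finite S" and ne: "S \<noteq> {}" and CS: "C \<subseteq> S"
  shows "card (Dg S C) = (\<Sum>x\<in>S. TT S C x)"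
proof -
  have U: "Dg S C = (\<Union>x\<in>S. {q \<in> Dg S C. \<forall>y\<in>S. (x,y) \<in> q})"
  proof
    show "Dg S C \<subseteq> (\<Union>x\<in>S. {q \<in> Dg S C. \<forall>y\<in>S. (x,y) \<in> q})"
    proof
      fix q assume q: "q \<in> Dg S C"
      then have "linear_order_on S q" by (simp add: Dg_def)
      then obtain x where "x \<in> S" "\<forall>y\<in>S. (x,y) \<in> q" using top_exists[OF _ fin ne] by blast
      then show "q \<in> (\<Union>x\<in>S. {q \<in> Dg S C. \<forall>y\<in>S. (x,y) \<in> q})" using q by blast
    qed
  qed blast
  have "card (Dg S C) = (\<Sum>x\<in>S. card {q \<in> Dg S C. \<forall>y\<in>S. (x,y) \<in> q})"
  proof (subst U, rule card_UN_disjoint[OF fin])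
    show "\<forall>x\<in>S. finite {q \<in> Dg S C. \<forall>y\<in>S. (x,y) \<in> q}"
    proof
      fix x show "finite {q \<in> Dg S C. \<forall>y\<in>S. (x,y) \<in> q}"
        by (rule finite_subset[OF _ Dg_finite[OF fin]]) blast
    qed
    show "\<forall>x\<in>S. \<forall>x'\<in>S. x \<noteq> x' \<longrightarrow> {q \<in> Dg S C. \<forall>y\<in>S. (x,y) \<in> q} \<inter> {q \<in> Dg S C. \<forall>y\<in>S. (x',y) \<in> q} = {}"
    proof (intro ballI impI)
      fix x x' assume xx: "x \<in> S" "x' \<in> S" "x \<noteq> x'"
      show "{q \<in> Dg S C. \<forall>y\<in>S. (x,y) \<in> q} \<inter> {q \<in> Dg S C. \<forall>y\<in>S. (x',y) \<in> q} = {}"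
      proof (rule ccontr)
        assume "{q \<in> Dg S C. \<forall>y\<in>S. (x,y) \<in> q} \<inter> {q \<in> Dg S C. \<forall>y\<in>S. (x',y) \<in> q} \<noteq> {}"
        then obtain q where q0: "q \<in> {q \<in> Dg S C. \<forall>y\<in>S. (x,y) \<in> q}" "q \<in> {q \<in> Dg S C. \<forall>y\<in>S. (x',y) \<in> q}"
          by blast
        then have q: "q \<in> Dg S C" "(x,x') \<in> q" "(x',x) \<in> q" using xx by auto
        have "linear_order_on S q" using q by (simp add: Dg_def)
        from lin_antisym[OF this q(2) q(3)] xx show False by simp
      qed
    qed
  qed
  also have "\<dots> = (\<Sum>x\<in>S. TT S C x)" by (rule sum.cong[OF refl count_top[OF fin _ CS]])
  finally show ?thesis .
qed


lemma Dg_sub: "q \<in> Dg S C \<Longrightarrow> q \<subseteq> S \<times> S"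
proof -
  assume "q \<in> Dg S C"
  then have lin: "linear_order_on S q" by (simp add: Dg_def)
  show "q \<subseteq> S \<times> S" using lin_sub[OF lin] by auto
qed

definition mp :: "(nat \<Rightarrow> nat) \<Rightarrow> nat rel \<Rightarrow> nat rel" where
  "mp h q = (\<lambda>(a,b). (h a, h b)) ` q"

lemma mp_mem:
  assumes inj: "inj_on h S" and sub: "q \<subseteq> S \<times> S" and ab: "a \<in> S" "b \<in> S"
  shows "(h a, h b) \<in> mp h q \<longleftrightarrow> (a,b) \<in> q"
proof
  assume "(h a, h b) \<in> mp h q"
  then obtain a' b' where ab': "(a',b') \<in> q" "h a' = h a" "h b' = h b" by (auto simp: mp_def)
  have "a' \<in> S" "b' \<in> S" using ab' sub by auto
  then have "a' = a" "b' = b" using inj ab ab' by (auto dest: inj_onD)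
  then show "(a,b) \<in> q" using ab' by simp
qed (force simp: mp_def)

lemma mp_sub: "q \<subseteq> S \<times> S \<Longrightarrow> mp h q \<subseteq> h ` S \<times> h ` S"
  by (auto simp: mp_def)

lemma iso_fwd:
  assumes sm: "strict_mono_on S h"
    and par: "\<forall>j\<in>S. (\<exists>i\<in>S. i < j) \<longrightarrow> (even (h j) \<longleftrightarrow> even j)"
    and CS: "C \<subseteq> S" and q: "q \<in> Dg S C"
  shows "mp h q \<in> Dg (h ` S) (h ` C)"
proof -
  have inj: "inj_on h S" using sm by (rule strict_mono_on_imp_inj_on)
  have lin: "linear_order_on S q" using q by (simp add: Dg_def)
  have sub: "q \<subseteq> S \<times> S" using lin_sub[OF lin] by auto
  have mem: "\<And>a b. a \<in> S \<Longrightarrow> b \<in> S \<Longrightarrow> (h a, h b) \<in> mp h q \<longleftrightarrow> (a,b) \<in> q"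
    using mp_mem[OF inj sub] by blast
  have lt: "\<And>a b. a \<in> S \<Longrightarrow> b \<in> S \<Longrightarrow> h a < h b \<longleftrightarrow> a < b"
    using strict_mono_on_less[OF sm] by blast
  have msub: "mp h q \<subseteq> h ` S \<times> h ` S" by (rule mp_sub[OF sub])
  have L: "linear_order_on (h ` S) (mp h q)"
  proof (rule linI)
    show "\<And>a b. (a,b) \<in> mp h q \<Longrightarrow> a \<in> h ` S \<and> b \<in> h ` S" using msub by blast
    show "\<And>x. x \<in> h ` S \<Longrightarrow> (x,x) \<in> mp h q" using mem lin_refl[OF lin] by auto
    show "\<And>a b c. (a,b) \<in> mp h q \<Longrightarrow> (b,c) \<in> mp h q \<Longrightarrow> (a,c) \<in> mp h q"
    proof -
      fix a b c assume h1: "(a,b) \<in> mp h q" and h2: "(b,c) \<in> mp h q"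
      obtain a0 b0 c0 where s: "a0 \<in> S" "b0 \<in> S" "c0 \<in> S" "a = h a0" "b = h b0" "c = h c0"
        using msub h1 h2 by blast
      then have "(a0,b0) \<in> q" "(b0,c0) \<in> q" using mem h1 h2 by auto
      then have "(a0,c0) \<in> q" by (rule lin_trans[OF lin])
      then show "(a,c) \<in> mp h q" using mem s by auto
    qed
    show "\<And>a b. (a,b) \<in> mp h q \<Longrightarrow> (b,a) \<in> mp h q \<Longrightarrow> a = b"
    proof -
      fix a b assume h1: "(a,b) \<in> mp h q" and h2: "(b,a) \<in> mp h q"
      obtain a0 b0 where s: "a0 \<in> S" "b0 \<in> S" "a = h a0" "b = h b0"
        using msub h1 by blast
      then have "(a0,b0) \<in> q" "(b0,a0) \<in> q" using mem h1 h2 by auto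
      then have "a0 = b0" by (rule lin_antisym[OF lin])
      then show "a = b" using s by simp
    qed
    show "\<And>x y. x \<in> h ` S \<Longrightarrow> y \<in> h ` S \<Longrightarrow> x \<noteq> y \<Longrightarrow> (x,y) \<in> mp h q \<or> (y,x) \<in> mp h q"
      using mem lin_total[OF lin] by fastforce
  qed
  have G: "good (h ` S) (mp h q)"
    unfolding good_def
  proof (intro ballI impI)
    fix i' j' k' assume "i' \<in> h ` S" "j' \<in> h ` S" "k' \<in> h ` S" and ij: "i' < j'" and jk: "j' < k'"
    then obtain i j k where s: "i \<in> S" "j \<in> S" "k \<in> S" "i' = h i" "j' = h j" "k' = h k" by blast
    have o: "i < j" "j < k" using ij jk s lt by auto
    have pj: "even j' \<longleftrightarrow> even j" using par s o by auto
    have g: "(even j \<longrightarrow> (i,j) \<in> q \<or> (i,k) \<in> q) \<and> (odd j \<longrightarrow> (i,k) \<in> q \<or> (j,k) \<in> q)"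
      using q s o unfolding Dg_def good_def by blast
    show "(even j' \<longrightarrow> (i',j') \<in> mp h q \<or> (i',k') \<in> mp h q) \<and> (odd j' \<longrightarrow> (i',k') \<in> mp h q \<or> (j',k') \<in> mp h q)"
      using g pj s mem by auto
  qed
  have Sr: "srt (h ` C) (mp h q)"
    unfolding srt_def
  proof (intro ballI impI)
    fix i' j' assume "i' \<in> h ` C" "j' \<in> h ` C" "i' < j'"
    then obtain i j where s: "i \<in> C" "j \<in> C" "i' = h i" "j' = h j" by blast
    then have "i < j" using lt CS \<open>i' < j'\<close> by auto
    then have "(i,j) \<in> q" using q s unfolding Dg_def srt_def by blast
    then show "(i',j') \<in> mp h q" using mem s CS by auto
  qed
  show ?thesis using L G Sr by (simp add: Dg_def)
qed

lemma iso:
  assumes sm: "strict_mono_on S h"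
    and par: "\<forall>j\<in>S. (\<exists>i\<in>S. i < j) \<longrightarrow> (even (h j) \<longleftrightarrow> even j)"
    and CS: "C \<subseteq> S"
  shows "card (Dg (h ` S) (h ` C)) = card (Dg S C)"
proof -
  define g where "g = inv_into S h"
  have inj: "inj_on h S" using sm by (rule strict_mono_on_imp_inj_on)
  have gh: "\<And>a. a \<in> S \<Longrightarrow> g (h a) = a" unfolding g_def using inj by simp
  have lt: "\<And>a b. a \<in> S \<Longrightarrow> b \<in> S \<Longrightarrow> h a < h b \<longleftrightarrow> a < b"
    using strict_mono_on_less[OF sm] by blast
  have gS: "g ` (h ` S) = S" using gh by force
  have gC: "g ` (h ` C) = C" using gh CS by force
  have smg: "strict_mono_on (h ` S) g"
    by (rule strict_mono_onI) (auto simp: gh lt)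
  have parg: "\<forall>j\<in>h ` S. (\<exists>i\<in>h ` S. i < j) \<longrightarrow> (even (g j) \<longleftrightarrow> even j)"
    using par lt gh by fastforce
  have hCS: "h ` C \<subseteq> h ` S" using CS by auto
  have f1: "mp h q \<in> Dg (h ` S) (h ` C)" if "q \<in> Dg S C" for q by (rule iso_fwd[OF sm par CS that])
  have f2: "mp g q \<in> Dg S C" if "q \<in> Dg (h ` S) (h ` C)" for q
    using iso_fwd[OF smg parg hCS that] unfolding gS gC .
  have b: "bij_betw (mp h) (Dg S C) (Dg (h ` S) (h ` C))"
  proof (rule bij_betw_byWitness[where f' = "mp g"])
    show "\<forall>a\<in>Dg S C. mp g (mp h a) = a"
    proof
      fix q assume "q \<in> Dg S C"
      then have sub: "q \<subseteq> S \<times> S" by (rule Dg_sub)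
      have "mp g (mp h q) = (\<lambda>(a,b). (g (h a), g (h b))) ` q" unfolding mp_def image_image
        by (simp add: case_prod_beta)
      also have "\<dots> = (\<lambda>p. p) ` q" using sub gh by (intro image_cong) auto
      finally show "mp g (mp h q) = q" by simp
    qed
    show "\<forall>a\<in>Dg (h ` S) (h ` C). mp h (mp g a) = a"
    proof
      fix q assume "q \<in> Dg (h ` S) (h ` C)"
      then have sub: "q \<subseteq> h ` S \<times> h ` S" by (rule Dg_sub)
      have hg: "\<And>u. u \<in> h ` S \<Longrightarrow> h (g u) = u" unfolding g_def by (simp add: f_inv_into_f)
      have "mp h (mp g q) = (\<lambda>(a,b). (h (g a), h (g b))) ` q" unfolding mp_def image_image
        by (simp add: case_prod_beta)
      also have "\<dots> = (\<lambda>p. p) ` q" using sub hg by (intro image_cong) auto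
      finally show "mp h (mp g q) = q" by simp
    qed
    show "mp h ` Dg S C \<subseteq> Dg (h ` S) (h ` C)" using f1 by blast
    show "mp g ` Dg (h ` S) (h ` C) \<subseteq> Dg S C" using f2 by blast
  qed
  show ?thesis using bij_betw_same_card[OF b] by simp
qed


lemma LR:
  assumes LR: "\<forall>l\<in>L. \<forall>r\<in>R. l < r"
  shows "card {q \<in> Dg (L \<union> R) L. \<forall>l\<in>L. \<forall>r\<in>R. (l,r) \<in> q} = card (Dg R {})"
proof -
  define e2 where "e2 q'' = {(a,b). a \<in> L \<and> b \<in> L \<and> a \<le> b} \<union> (L \<times> R) \<union> q''" for q''
  have disj: "\<And>a. a \<in> L \<Longrightarrow> a \<in> R \<Longrightarrow> False" using LR by blast
  define A where "A = {q \<in> Dg (L \<union> R) L. \<forall>l\<in>L. \<forall>r\<in>R. (l,r) \<in> q}"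
  have b: "bij_betw (\<lambda>q. Restr q R) A (Dg R {})"
  proof (rule bij_betw_byWitness[where f' = e2])
    show "\<forall>q\<in>A. e2 (Restr q R) = q"
    proof
      fix q assume qA: "q \<in> A"
      have lin: "linear_order_on (L \<union> R) q" and st: "srt L q" and cr: "\<forall>l\<in>L. \<forall>r\<in>R. (l,r) \<in> q"
        using qA by (auto simp: A_def Dg_def)
      show "e2 (Restr q R) = q"
      proof
        show "e2 (Restr q R) \<subseteq> q"
        proof
          fix p assume "p \<in> e2 (Restr q R)"
          then obtain a b where p: "p = (a,b)" and c: "(a \<in> L \<and> b \<in> L \<and> a \<le> b) \<or> (a \<in> L \<and> b \<in> R) \<or> (a,b) \<in> Restr q R"
            unfolding e2_def by blast
          show "p \<in> q"
            using c
          proof (elim disjE)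
            assume "a \<in> L \<and> b \<in> L \<and> a \<le> b"
            then show ?thesis using st lin_refl[OF lin] p unfolding srt_def by (cases "a = b") auto
          qed (use cr p in auto)
        qed
        show "q \<subseteq> e2 (Restr q R)"
        proof
          fix p assume pq: "p \<in> q"
          obtain a b where p: "p = (a,b)" by (cases p)
          have ab: "a \<in> L \<union> R" "b \<in> L \<union> R" using lin_sub[OF lin] pq p by auto
          show "p \<in> e2 (Restr q R)"
          proof (cases "a \<in> L")
            case aL: True
            show ?thesis
            proof (cases "b \<in> L")
              case True
              have "a \<le> b"
              proof (rule ccontr)
                assume "\<not> a \<le> b"
                then have "(b,a) \<in> q" using st aL True unfolding srt_def by auto
                then have "a = b" using lin_antisym[OF lin] pq p by blast
                then show False using \<open>\<not> a \<le> b\<close> by simp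
              qed
              then show ?thesis using aL True p by (auto simp: e2_def)
            next
              case False then show ?thesis using aL ab p by (auto simp: e2_def)
            qed
          next
            case aR: False
            then have aR': "a \<in> R" using ab by auto
            show ?thesis
            proof (cases "b \<in> L")
              case True
              then have "(b,a) \<in> q" using cr aR' by blast
              then have "a = b" using lin_antisym[OF lin] pq p by blast
              then show ?thesis using True aR by simp
            next
              case False
              then have "b \<in> R" using ab by auto
              then show ?thesis using aR' pq p by (auto simp: e2_def)
            qed
          qed
        qed
      qed
    qed
    show "\<forall>q\<in>Dg R {}. Restr (e2 q) R = q"
    proof
      fix q assume "q \<in> Dg R {}"
      then have sub: "q \<subseteq> R \<times> R" by (rule Dg_sub)
      show "Restr (e2 q) R = q" using sub disj unfolding e2_def by blast
    qed
    show "(\<lambda>q. Restr q R) ` A \<subseteq> Dg R {}"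
    proof
      fix q' assume "q' \<in> (\<lambda>q. Restr q R) ` A"
      then obtain q where qA: "q \<in> A" and q': "q' = Restr q R" by blast
      have lin: "linear_order_on (L \<union> R) q" and g: "good (L \<union> R) q"
        using qA by (auto simp: A_def Dg_def)
      have "linear_order_on R (Restr q R)" by (rule lin_restr[OF lin]) auto
      moreover have "good R (Restr q R)" using g unfolding good_def by auto
      moreover have "srt {} (Restr q R)" by (simp add: srt_def)
      ultimately show "q' \<in> Dg R {}" using q' by (simp add: Dg_def)
    qed
    show "e2 ` Dg R {} \<subseteq> A"
    proof
      fix q' assume "q' \<in> e2 ` Dg R {}"
      then obtain q where qD: "q \<in> Dg R {}" and q': "q' = e2 q" by blast
      have lin: "linear_order_on R q" and g: "good R q" using qD by (auto simp: Dg_def)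
      have sub: "q \<subseteq> R \<times> R" using qD by (rule Dg_sub)
      have mem: "(a,b) \<in> e2 q \<longleftrightarrow> (a \<in> L \<and> b \<in> L \<and> a \<le> b) \<or> (a \<in> L \<and> b \<in> R) \<or> (a,b) \<in> q" for a b
        by (auto simp: e2_def)
      have L1: "linear_order_on (L \<union> R) (e2 q)"
      proof (rule linI)
        show "\<And>a b. (a,b) \<in> e2 q \<Longrightarrow> a \<in> L \<union> R \<and> b \<in> L \<union> R" using sub unfolding mem by blast
        show "\<And>x. x \<in> L \<union> R \<Longrightarrow> (x,x) \<in> e2 q" using lin_refl[OF lin] unfolding mem by blast
        show "\<And>a b c. (a,b) \<in> e2 q \<Longrightarrow> (b,c) \<in> e2 q \<Longrightarrow> (a,c) \<in> e2 q"
          unfolding mem using lin_trans[OF lin] sub disj by (auto; blast)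
        show "\<And>a b. (a,b) \<in> e2 q \<Longrightarrow> (b,a) \<in> e2 q \<Longrightarrow> a = b"
          unfolding mem using lin_antisym[OF lin] sub disj by (auto; blast)
        show "\<And>x y. x \<in> L \<union> R \<Longrightarrow> y \<in> L \<union> R \<Longrightarrow> x \<noteq> y \<Longrightarrow> (x,y) \<in> e2 q \<or> (y,x) \<in> e2 q"
          unfolding mem using lin_total[OF lin] by auto
      qed
      have G1: "good (L \<union> R) (e2 q)"
        unfolding good_def
      proof (intro ballI impI)
        fix i j k assume ijk: "i \<in> L \<union> R" "j \<in> L \<union> R" "k \<in> L \<union> R" "i < j" "j < k"
        show "(even j \<longrightarrow> (i,j) \<in> e2 q \<or> (i,k) \<in> e2 q) \<and> (odd j \<longrightarrow> (i,k) \<in> e2 q \<or> (j,k) \<in> e2 q)"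
        proof (cases "i \<in> L")
          case True
          then show ?thesis using ijk unfolding mem by auto
        next
          case False
          then have "i \<in> R" using ijk by auto
          have jR: "j \<in> R"
          proof (rule ccontr)
            assume "j \<notin> R"
            then have "j \<in> L" using ijk by auto
            then have "j < i" using LR \<open>i \<in> R\<close> by blast
            then show False using ijk by simp
          qed
          have kR: "k \<in> R"
          proof (rule ccontr)
            assume "k \<notin> R"
            then have "k \<in> L" using ijk by auto
            then have "k < i" using LR \<open>i \<in> R\<close> by blast
            then show False using ijk by simp
          qed
          note jR kR
          then show ?thesis using g \<open>i \<in> R\<close> ijk unfolding good_def mem by blast
        qed
      qed
      have S1: "srt L (e2 q)" unfolding srt_def mem by auto
      have C1: "\<forall>l\<in>L. \<forall>r\<in>R. (l,r) \<in> e2 q" unfolding mem by auto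
      show "q' \<in> A" using L1 G1 S1 C1 q' by (simp add: A_def Dg_def)
    qed
  qed
  show ?thesis using bij_betw_same_card[OF b] unfolding A_def .
qed



lemma cat_nonneg: "cat n \<ge> 0"
proof (induction n rule: less_induct)
  case (less n)
  then show ?case by (cases n) (auto intro!: sum_nonneg)
qed

definition x0 :: real where "x0 = (sqrt 2 - 1) / 2"

lemma sqrt2_facts: "sqrt 2 * sqrt 2 = (2::real)" "sqrt 2 > (1::real)" "sqrt 2 < (3/2::real)"
proof -
  show "sqrt 2 * sqrt 2 = (2::real)" by simp
  show "sqrt 2 > (1::real)" by (simp add: real_less_rsqrt)
  have "sqrt 2 < sqrt (9/4::real)" by (simp add: real_sqrt_less_iff)
  also have "sqrt (9/4::real) = 3/2" by (simp add: real_sqrt_divide) 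
  finally show "sqrt 2 < (3/2::real)" .
qed

lemma x0_pos: "x0 > 0" using sqrt2_facts by (simp add: x0_def)

lemma tri_le_sq:
  fixes a :: "nat \<Rightarrow> real"
  assumes "\<And>n. a n \<ge> 0"
  shows "(\<Sum>n<N. \<Sum>i\<le>n. a i * a (n - i)) \<le> (\<Sum>i<N. a i)^2"
proof -
  have "(\<Sum>n<N. \<Sum>i\<le>n. a i * a (n - i)) = (\<Sum>(i,j)\<in>{(i,j). i+j < N}. a i * a j)"
    by (rule sum.triangle_reindex[symmetric])
  also have "\<dots> \<le> (\<Sum>(i,j)\<in>{..<N}\<times>{..<N}. a i * a j)"
    by (rule sum_mono2) (auto simp: assms)
  also have "\<dots> = (\<Sum>i<N. a i)^2"
    by (simp add: power2_eq_square sum_product sum.cartesian_product)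
  finally show ?thesis .
qed

definition ca :: "nat \<Rightarrow> real" where "ca n = cat n * x0^n"

lemma ca_nonneg: "ca n \<ge> 0" using cat_nonneg x0_pos by (simp add: ca_def)

lemma ca_conv: "(\<Sum>i\<le>n. ca i * ca (n - i)) = x0^n * cat (Suc n)"
proof -
  have "(\<Sum>i\<le>n. ca i * ca (n - i)) = (\<Sum>i\<le>n. x0^n * (cat i * cat (n - i)))"
    by (rule sum.cong) (auto simp: ca_def power_add[symmetric])
  also have "\<dots> = x0^n * cat (Suc n)" by (simp add: sum_distrib_left)
  finally show ?thesis .
qed

lemma ca_partial: "(\<Sum>i<N. ca i) \<le> sqrt 2"
proof (induction N)
  case 0 then show ?case by simp
next
  case (Suc N)
  have "(\<Sum>i<Suc N. ca i) = ca 0 + (\<Sum>n<N. ca (Suc n))" by (rule sum.lessThan_Suc_shift)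
  also have "(\<Sum>n<N. ca (Suc n)) = x0 * (\<Sum>n<N. \<Sum>i\<le>n. ca i * ca (n - i))"
    by (simp only: ca_conv) (simp add: ca_def sum_distrib_left mult_ac)
  also have "\<dots> \<le> x0 * (\<Sum>i<N. ca i)^2"
    using tri_le_sq[of ca N] ca_nonneg x0_pos by (simp add: mult_left_mono)
  also have "(\<Sum>i<N. ca i)^2 \<le> (sqrt 2)^2"
    using Suc sum_nonneg[of "{..<N}" ca] ca_nonneg by (intro power_mono) auto
  finally have "(\<Sum>i<Suc N. ca i) \<le> ca 0 + x0 * 2" using x0_pos by (simp add: mult_left_mono)
  also have "\<dots> = sqrt 2" by (simp add: ca_def x0_def field_simps)
  finally show ?case .
qed

lemma ca_summable: "summable ca"
  using ca_partial ca_nonneg by (intro summableI_nonneg_bounded) auto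

lemma ca_sum: "suminf ca = sqrt 2"
proof -
  define s where "s = suminf ca"
  have sle: "s \<le> sqrt 2" unfolding s_def by (rule suminf_le_const[OF ca_summable ca_partial])
  have ns: "summable (\<lambda>k. norm (ca k))" using ca_summable ca_nonneg by simp
  have "(\<lambda>k. \<Sum>i\<le>k. ca i * ca (k - i)) sums (s * s)"
    unfolding s_def by (rule Cauchy_product_sums[OF ns ns])
  then have "(\<lambda>k. x0 ^ k * cat (Suc k)) sums (s * s)" by (simp add: ca_conv)
  then have "(\<lambda>k. x0 * (x0 ^ k * cat (Suc k))) sums (x0 * (s * s))" by (rule sums_mult)
  then have "(\<lambda>k. ca (Suc k)) sums (x0 * (s * s))" by (simp add: ca_def mult_ac)
  then have "ca sums (x0*(s * s) + ca 0)" by (simp add: sums_Suc_iff)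
  then have "suminf ca = x0*(s * s) + ca 0" by (rule sums_unique[symmetric])
  then have seq: "s = x0*(s * s) + 1" by (simp add: s_def ca_def)
  define w where "w = sqrt (2::real)"
  have w2: "w * w = 2" unfolding w_def by simp
  have xw: "x0 = (w - 1) / 2" unfolding w_def x0_def ..
  have "x0 * ((s - w) * (s - (2 + w))) = x0 * (s * s) - s * (x0 * (2 + 2 * w)) + x0 * (w * (2 + w))"
    by (simp add: algebra_simps)
  also have "x0 * (2 + 2 * w) = ((w * w) - 1)" unfolding xw by (simp add: field_simps)
  also have "x0 * (w * (2 + w)) = (w*w + w * (w * w) - 2 * w)/2" unfolding xw by (simp add: field_simps)
  finally have "x0 * ((s - w) * (s - (2 + w))) = x0 * (s * s) - s + 1" unfolding w2 by simp
  then have "x0 * ((s - sqrt 2) * (s - (2 + sqrt 2))) = 0" using seq unfolding w_def by simp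
  then have "(s - sqrt 2) * (s - (2 + sqrt 2)) = 0" using x0_pos by simp
  then show ?thesis using sle unfolding s_def[symmetric] by auto
qed

lemma lin_rec_limit:
  fixes \<beta> \<zeta> :: "nat \<Rightarrow> real"
  assumes th: "\<bar>\<theta>\<bar> < 1" and lim: "\<zeta> \<longlonglongrightarrow> Z" and rec: "\<And>m. \<beta> (Suc m) = \<zeta> m + \<theta> * \<beta> m"
  shows "\<beta> \<longlonglongrightarrow> Z / (1 - \<theta>)"
proof (rule LIMSEQ_I)
  fix \<epsilon> :: real assume ep: "\<epsilon> > 0"
  define L where "L = Z / (1 - \<theta>)"
  have th1: "1 - \<theta> \<noteq> 0" using th by auto
  have LZ: "L = Z + \<theta> * L"
  proof -
    have "L * (1 - \<theta>) = Z" unfolding L_def using th1 by simp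
    then show ?thesis by (simp add: algebra_simps)
  qed
  define e where "e m = \<beta> m - L" for m
  have erec: "e (Suc m) = (\<zeta> m - Z) + \<theta> * e m" for m
  proof -
    have "e (Suc m) = \<zeta> m + \<theta> * \<beta> m - L" unfolding e_def rec ..
    also have "\<dots> = \<zeta> m + \<theta> * \<beta> m - (Z + \<theta> * L)" using LZ by simp
    also have "\<dots> = (\<zeta> m - Z) + \<theta> * e m" unfolding e_def by (simp add: algebra_simps)
    finally show ?thesis .
  qed
  define a where "a = \<bar>\<theta>\<bar>"
  have a0: "a \<ge> 0" and a1: "a < 1" using th by (auto simp: a_def)
  define \<delta> where "\<delta> = \<epsilon> * (1 - a) / 2"
  have dpos: "\<delta> > 0" using ep a1 by (simp add: \<delta>_def)
  obtain M where M: "\<And>m. m \<ge> M \<Longrightarrow> \<bar>\<zeta> m - Z\<bar> < \<delta>" using LIMSEQ_D[OF lim dpos] by auto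
  have bound: "\<bar>e (M + n)\<bar> \<le> a^n * \<bar>e M\<bar> + \<epsilon>/2" for n
  proof (induction n)
    case 0 then show ?case using ep by simp
  next
    case (Suc n)
    have "\<bar>e (M + Suc n)\<bar> = \<bar>(\<zeta> (M+n) - Z) + \<theta> * e (M+n)\<bar>" using erec[of "M+n"] by simp
    also have "\<dots> \<le> \<bar>\<zeta> (M+n) - Z\<bar> + a * \<bar>e (M+n)\<bar>" unfolding a_def
      by (rule order_trans[OF abs_triangle_ineq]) (simp add: abs_mult)
    also have "\<dots> \<le> \<delta> + a * (a^n * \<bar>e M\<bar> + \<epsilon>/2)"
      using M[of "M+n"] Suc a0 by (intro add_mono mult_left_mono) auto
    also have "\<dots> = a^Suc n * \<bar>e M\<bar> + (\<delta> + a * (\<epsilon>/2))" by (simp add: algebra_simps)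
    also have "\<delta> + a * (\<epsilon>/2) = \<epsilon>/2" unfolding \<delta>_def by (simp add: field_simps)
    finally show ?case .
  qed
  have "(\<lambda>n. a^n * \<bar>e M\<bar>) \<longlonglongrightarrow> 0 * \<bar>e M\<bar>"
    using a0 a1 by (intro tendsto_mult_right LIMSEQ_power_zero) simp
  then have "(\<lambda>n. a^n * \<bar>e M\<bar>) \<longlonglongrightarrow> 0" by simp
  from LIMSEQ_D[OF this, of "\<epsilon>/2"] ep obtain N1 where N1: "\<And>n. n \<ge> N1 \<Longrightarrow> norm (a^n * \<bar>e M\<bar> - 0) < \<epsilon>/2"
    by auto
  show "\<exists>no. \<forall>n\<ge>no. norm (\<beta> n - Z / (1 - \<theta>)) < \<epsilon>"
  proof (intro exI allI impI)
    fix n assume n: "n \<ge> M + N1"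
    define k where "k = n - M"
    have k: "n = M + k" "k \<ge> N1" using n by (auto simp: k_def)
    have "\<bar>e n\<bar> \<le> a^k * \<bar>e M\<bar> + \<epsilon>/2" using bound[of k] k by simp
    also have "\<dots> < \<epsilon>" using N1[OF k(2)] by simp
    finally show "norm (\<beta> n - Z / (1 - \<theta>)) < \<epsilon>" by (simp add: e_def L_def)
  qed
qed

lemma bb_lim: "(\<lambda>m. bb m * x0^m) \<longlonglongrightarrow> sqrt 2 / 4"
proof -
  define w where "w = sqrt (2::real)"
  have w2: "w * w = 2" unfolding w_def by simp
  have w1: "w > 1" "w < 3/2" using sqrt2_facts unfolding w_def by auto
  have xw: "x0 = (w - 1) / 2" unfolding w_def x0_def ..
  define \<rho> where "\<rho> = 2 - 2 * w"
  define r where "r = 2 + 2 * w"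
  have rx: "r * x0 = 1"
  proof -
    have "r * x0 = (w * w - 1)" unfolding r_def xw by (simp add: field_simps)
    then show ?thesis using w2 by simp
  qed
  have r4: "4 - \<rho> = r" unfolding r_def \<rho>_def by simp
  have rr: "r * \<rho> = -4"
  proof -
    have "r * \<rho> = 4 - 4 * (w * w)" unfolding r_def \<rho>_def by (simp add: algebra_simps)
    then show ?thesis using w2 by simp
  qed
  define z where "z m = bb (Suc m) - \<rho> * bb m" for m
  define \<zeta> where "\<zeta> m = z m * x0 ^ Suc m" for m
  have zrec: "z (Suc (Suc n)) = r * z (Suc n) - cat (Suc (Suc n))" for n
  proof -
    have "z (Suc (Suc n)) = (4 - \<rho>) * bb (Suc (Suc n)) + 4 * bb (Suc n) - cat (Suc (Suc n))"
      unfolding z_def by (simp add: algebra_simps)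
    also have "\<dots> = r * bb (Suc (Suc n)) - (r * \<rho>) * bb (Suc n) - cat (Suc (Suc n))"
      unfolding r4 rr by simp
    also have "\<dots> = r * z (Suc n) - cat (Suc (Suc n))" unfolding z_def by (simp add: algebra_simps)
    finally show ?thesis .
  qed
  have \<zeta>rec: "\<zeta> (Suc (Suc n)) = \<zeta> (Suc n) - x0 * ca (Suc (Suc n))" for n
  proof -
    have "\<zeta> (Suc (Suc n)) = (r * x0) * (z (Suc n) * x0 ^ Suc (Suc n)) - x0 * (cat (Suc (Suc n)) * x0 ^ Suc (Suc n))"
      unfolding \<zeta>_def zrec by (simp add: algebra_simps)
    then show ?thesis unfolding rx \<zeta>_def ca_def by simp
  qed
  define K where "K = \<zeta> 1 + x0 * (1 + x0)"
  have inv: "\<zeta> (Suc n) = K - x0 * (\<Sum>i<n+2. ca i)" for n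
  proof (induction n)
    case 0 then show ?case by (simp add: K_def ca_def numeral_2_eq_2)
  next
    case (Suc n)
    have "(\<Sum>i<Suc n + 2. ca i) = (\<Sum>i<n+2. ca i) + ca (Suc (Suc n))" by simp
    then show ?case using Suc \<zeta>rec[of n] by (simp add: algebra_simps)
  qed
  have "(\<lambda>n. (\<Sum>i<n. ca i)) \<longlonglongrightarrow> sqrt 2" using summable_LIMSEQ[OF ca_summable] ca_sum by simp
  then have "(\<lambda>n. (\<Sum>i<n+2. ca i)) \<longlonglongrightarrow> sqrt 2" by (rule LIMSEQ_ignore_initial_segment)
  then have "(\<lambda>n. K - x0 * (\<Sum>i<n+2. ca i)) \<longlonglongrightarrow> K - x0 * sqrt 2" by (intro tendsto_intros)
  then have "(\<lambda>n. \<zeta> (Suc n)) \<longlonglongrightarrow> K - x0 * sqrt 2" unfolding inv .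
  then have zlim: "\<zeta> \<longlonglongrightarrow> K - x0 * sqrt 2" by (rule LIMSEQ_imp_Suc)
  define \<theta> where "\<theta> = \<rho> * x0"
  have thw: "\<theta> = 2 * w - 3"
  proof -
    have "\<theta> = (2*w - w*w - 1)" unfolding \<theta>_def \<rho>_def xw by (simp add: field_simps)
    then show ?thesis using w2 by simp
  qed
  have th: "\<bar>\<theta>\<bar> < 1" using w1 thw by simp
  have brec: "bb (Suc m) * x0 ^ Suc m = \<zeta> m + \<theta> * (bb m * x0 ^ m)" for m
    unfolding \<zeta>_def z_def \<theta>_def by (simp add: algebra_simps)
  have lim: "(\<lambda>m. bb m * x0^m) \<longlonglongrightarrow> (K - x0 * sqrt 2) / (1 - \<theta>)"
    by (rule lin_rec_limit[OF th zlim brec])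
  have Kv: "K - x0 * sqrt 2 = w - 1"
  proof -
    have z1: "\<zeta> 1 = (9 - 2 * \<rho>) * x0^2" unfolding \<zeta>_def z_def by (simp add: numeral_2_eq_2)
    have "K - x0 * sqrt 2 = (5 + 4*w) * x0^2 + x0 * (1 + x0) - x0 * w"
      unfolding K_def z1 w_def \<rho>_def by (simp add: algebra_simps)
    also have "\<dots> = (4*w*(w*w) - 4*(w*w) - 4*w + 4) / 4" unfolding xw by (simp add: field_simps power2_eq_square)
    also have "\<dots> = w - 1" using w2 by (simp add: field_simps)
    finally show ?thesis .
  qed
  have "(K - x0 * sqrt 2) / (1 - \<theta>) = sqrt 2 / 4"
  proof -
    have "(K - x0 * sqrt 2) / (1 - \<theta>) = (w - 1) / (4 - 2 * w)" unfolding Kv thw by simp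
    also have "\<dots> = w / 4"
    proof -
      have "4 - 2 * w \<noteq> 0" using w1 by simp
      moreover have "(w - 1) * 4 = w * (4 - 2 * w)" using w2 by (simp add: algebra_simps)
      ultimately show ?thesis by (simp add: field_simps)
    qed
    finally show ?thesis unfolding w_def .
  qed
  with lim show ?thesis by simp
qed



definition Sk :: "nat \<Rightarrow> nat \<Rightarrow> nat set" where
  "Sk k N = {x. x \<le> N \<and> (odd x \<longrightarrow> 2*k < x)}"
definition Ck :: "nat \<Rightarrow> nat set" where
  "Ck k = {x. even x \<and> x < 2*k}"
definition Hc :: "nat \<Rightarrow> nat \<Rightarrow> nat" where
  "Hc k N = card (Dg (Sk k N) (Ck k))"

lemma Sk_finite: "finite (Sk k N)"
  by (rule finite_subset[of _ "{..N}"]) (auto simp: Sk_def)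

lemma Ck_sub: "2*k \<le> Suc N \<Longrightarrow> Ck k \<subseteq> Sk k N"
  by (auto simp: Ck_def Sk_def)

lemma Dg_empty: "Dg {} {} = {{}}"
proof
  show "Dg {} {} \<subseteq> {{}}" using Dg_sub by fastforce
  show "{{}} \<subseteq> Dg {} {}" by (simp add: Dg_def good_def srt_def)
qed

lemma Dg_LL: "card (Dg L L) = 1"
proof -
  have "card {q \<in> Dg (L \<union> {}) L. \<forall>l\<in>L. \<forall>r\<in>{}. (l,r) \<in> q} = card (Dg {} {})"
    by (rule LR) simp
  then show ?thesis by (simp add: Dg_empty)
qed

lemma TT_zero1: "x \<in> C \<Longrightarrow> i \<in> C \<Longrightarrow> i < x \<Longrightarrow> TT S C x = 0"
  unfolding TT_def by (subst card_eq_0_iff) auto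

lemma TT_zero2: "i \<in> S \<Longrightarrow> j \<in> S \<Longrightarrow> i < j \<Longrightarrow> j < x \<Longrightarrow> odd j \<Longrightarrow> TT S C x = 0"
  unfolding TT_def by (subst card_eq_0_iff) auto

lemma TT_0: "TT S C 0 = card (Dg (S - {0}) (C - {0}))"
  unfolding TT_def by simp

lemma shift_img: "(\<lambda>y. y + (c::nat)) ` {y. P y} = {x. c \<le> x \<and> P (x - c)}"
proof
  show "(\<lambda>y. y + c) ` {y. P y} \<subseteq> {x. c \<le> x \<and> P (x - c)}" by (rule image_subsetI) simp
  show "{x. c \<le> x \<and> P (x - c)} \<subseteq> (\<lambda>y. y + c) ` {y. P y}"
  proof
    fix x assume "x \<in> {x. c \<le> x \<and> P (x - c)}"
    then have "x = (x - c) + c" "x - c \<in> {y. P y}" by auto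
    then show "x \<in> (\<lambda>y. y + c) ` {y. P y}" by blast
  qed
qed

lemma Hc_top0:
  assumes "1 \<le> k" "2 * k \<le> N"
  shows "TT (Sk k N) (Ck k) 0 = Hc (k - 1) (N - 2)"
proof -
  have e1: "Sk k N - {0} = (\<lambda>y. y + 2) ` Sk (k - 1) (N - 2)"
    unfolding Sk_def shift_img using assms by (auto; presburger)
  have e2: "Ck k - {0} = (\<lambda>y. y + 2) ` Ck (k - 1)"
    unfolding Ck_def shift_img using assms by (auto; presburger)
  have "card (Dg ((\<lambda>y. y + 2) ` Sk (k - 1) (N - 2)) ((\<lambda>y. y + 2) ` Ck (k - 1))) = Hc (k - 1) (N - 2)"
    unfolding Hc_def
  proof (rule iso)
    show "strict_mono_on (Sk (k - 1) (N - 2)) (\<lambda>y. y + 2)" by (simp add: strict_mono_onI)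
    show "\<forall>j\<in>Sk (k - 1) (N - 2). (\<exists>i\<in>Sk (k - 1) (N - 2). i < j) \<longrightarrow> even (j + 2) = even j" by simp
    show "Ck (k - 1) \<subseteq> Sk (k - 1) (N - 2)" using assms by (intro Ck_sub) simp
  qed
  then show ?thesis unfolding TT_0 e1 e2 .
qed


lemma Sk_lt: "i \<in> Sk k N \<Longrightarrow> i < Suc (2*k) \<Longrightarrow> even i"
  unfolding Sk_def by auto

definition sideP :: "nat set \<Rightarrow> nat set \<Rightarrow> nat \<Rightarrow> nat rel \<Rightarrow> bool" where
  "sideP S C x q' \<longleftrightarrow> (x \<in> C \<longrightarrow> (\<forall>i\<in>C. \<not> i < x)) \<and>
     (\<forall>i\<in>S. \<forall>j\<in>S. i < j \<longrightarrow> j < x \<longrightarrow> even j \<and> (i,j) \<in> q') \<and>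
     (even x \<longrightarrow> (\<forall>i\<in>S. \<forall>k\<in>S. i < x \<longrightarrow> x < k \<longrightarrow> (i,k) \<in> q'))"

lemma TT_alt: "TT S C x = card {q' \<in> Dg (S - {x}) (C - {x}). sideP S C x q'}"
  unfolding TT_def sideP_def ..

lemma Hc_top2k:
  assumes k: "1 \<le> k" and N: "2 * k \<le> N"
  shows "TT (Sk k N) (Ck k) (2*k) = card (Dg {x. 2*k < x \<and> x \<le> N} {})"
proof -
  define R where "R = {x. 2*k < x \<and> x \<le> N}"
  define S where "S = Sk k N"
  define C where "C = Ck k"
  have e1: "S - {2*k} = C \<union> R" unfolding S_def Sk_def C_def Ck_def R_def using k N by (auto; presburger)
  have e2: "C - {2*k} = C" by (auto simp: C_def Ck_def)
  have n2: "2*k \<notin> C" by (simp add: C_def Ck_def)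
  have SC: "i \<in> S \<Longrightarrow> i < 2*k \<Longrightarrow> i \<in> C" for i using Sk_lt[of i k N] by (auto simp: C_def Ck_def S_def)
  have SR: "i \<in> S \<Longrightarrow> 2*k < i \<Longrightarrow> i \<in> R" for i by (auto simp: S_def Sk_def R_def)
  have CS: "C \<subseteq> S" unfolding C_def S_def using N by (intro Ck_sub) simp
  have RS: "R \<subseteq> S" by (auto simp: S_def Sk_def R_def)
  have CR: "l \<in> C \<Longrightarrow> r \<in> R \<Longrightarrow> l < 2*k \<and> 2*k < r" for l r by (auto simp: C_def Ck_def R_def)
  have key: "sideP S C (2*k) q \<longleftrightarrow> (\<forall>l\<in>C. \<forall>r\<in>R. (l,r) \<in> q)" if D: "q \<in> Dg (C \<union> R) C" for q
  proof
    assume sp: "sideP S C (2*k) q"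
    then have c3: "\<forall>i\<in>S. \<forall>k'\<in>S. i < 2*k \<longrightarrow> 2*k < k' \<longrightarrow> (i,k') \<in> q" unfolding sideP_def by simp
    show "\<forall>l\<in>C. \<forall>r\<in>R. (l,r) \<in> q"
    proof (intro ballI)
      fix l r assume "l \<in> C" "r \<in> R"
      then have "l \<in> S" "r \<in> S" "l < 2*k" "2*k < r" using CS RS CR by auto
      then show "(l,r) \<in> q" using c3 by blast
    qed
  next
    assume cr: "\<forall>l\<in>C. \<forall>r\<in>R. (l,r) \<in> q"
    have st: "srt C q" using D by (simp add: Dg_def)
    have c2: "\<forall>i\<in>S. \<forall>j\<in>S. i < j \<longrightarrow> j < 2*k \<longrightarrow> even j \<and> (i,j) \<in> q"
    proof (intro ballI impI)
      fix i j assume ij: "i \<in> S" "j \<in> S" "i < j" "j < 2*k"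
      then have "i \<in> C" "j \<in> C" using SC by auto
      then show "even j \<and> (i,j) \<in> q" using st ij unfolding srt_def by (auto simp: C_def Ck_def)
    qed
    have c3: "\<forall>i\<in>S. \<forall>k'\<in>S. i < 2*k \<longrightarrow> 2*k < k' \<longrightarrow> (i,k') \<in> q"
    proof (intro ballI impI)
      fix i k' assume "i \<in> S" "k' \<in> S" "i < 2*k" "2*k < k'"
      then have "i \<in> C" "k' \<in> R" using SC SR by auto
      then show "(i,k') \<in> q" using cr by blast
    qed
    show "sideP S C (2*k) q" unfolding sideP_def using n2 c2 c3 by blast
  qed
  have set: "{q' \<in> Dg (S - {2*k}) (C - {2*k}). sideP S C (2*k) q'} = {q \<in> Dg (C \<union> R) C. \<forall>l\<in>C. \<forall>r\<in>R. (l,r) \<in> q}"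
    unfolding e1 e2 using key by blast
  have "TT S C (2*k) = card {q \<in> Dg (C \<union> R) C. \<forall>l\<in>C. \<forall>r\<in>R. (l,r) \<in> q}" unfolding TT_alt set ..
  also have "\<dots> = card (Dg R {})"
  proof (rule LR)
    show "\<forall>l\<in>C. \<forall>r\<in>R. l < r" using CR by fastforce
  qed
  finally show ?thesis unfolding R_def S_def C_def .
qed

lemma Hc_top2k1:
  assumes N: "Suc (2 * k) \<le> N"
  shows "TT (Sk k N) (Ck k) (Suc (2*k)) = Hc (Suc k) N"
proof -
  define S where "S = Sk k N"
  define C where "C = Ck k"
  define x where "x = Suc (2*k)"
  have e1: "S - {x} = Sk (Suc k) N" unfolding S_def Sk_def x_def by (auto; presburger)
  have e2: "C - {x} = C" by (auto simp: C_def Ck_def x_def)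
  have n2: "x \<notin> C" by (simp add: C_def Ck_def x_def)
  have ox: "\<not> even x" by (simp add: x_def)
  have C1: "Ck (Suc k) = {y \<in> S. y < x}" using N unfolding Ck_def Sk_def S_def x_def by (auto; presburger)
  have CC: "C \<subseteq> Ck (Suc k)" by (auto simp: Ck_def C_def)
  have key: "(srt C q \<and> sideP S C x q) \<longleftrightarrow> srt (Ck (Suc k)) q" for q
  proof
    assume a: "srt C q \<and> sideP S C x q"
    then have c2: "\<forall>i\<in>S. \<forall>j\<in>S. i < j \<longrightarrow> j < x \<longrightarrow> even j \<and> (i,j) \<in> q" unfolding sideP_def by blast
    show "srt (Ck (Suc k)) q" unfolding srt_def C1 using c2 by blast
  next
    assume st: "srt (Ck (Suc k)) q"
    have st0: "srt C q" using st CC unfolding srt_def by blast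
    have c2: "\<forall>i\<in>S. \<forall>j\<in>S. i < j \<longrightarrow> j < x \<longrightarrow> even j \<and> (i,j) \<in> q"
    proof (intro ballI impI)
      fix i j assume ij: "i \<in> S" "j \<in> S" "i < j" "j < x"
      then have "i \<in> Ck (Suc k)" "j \<in> Ck (Suc k)" unfolding C1 by auto
      then show "even j \<and> (i,j) \<in> q" using st ij unfolding srt_def by (auto simp: Ck_def)
    qed
    show "srt C q \<and> sideP S C x q" unfolding sideP_def using st0 n2 ox c2 by blast
  qed
  have set: "{q' \<in> Dg (S - {x}) (C - {x}). sideP S C x q'} = Dg (Sk (Suc k) N) (Ck (Suc k))"
    unfolding e1 e2 Dg_def using key by blast
  show ?thesis using set unfolding TT_alt Hc_def S_def C_def x_def by simp
qed

lemma tail_iso: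
  assumes N: "Suc (2 * k) \<le> N"
  shows "card (Dg {x. 2*k < x \<and> x \<le> N} {}) = Hc 1 (N - 2*k)"
proof -
  define h where "h y = (if y = 0 then Suc (2*k) else y + 2*k)" for y
  have img: "h ` Sk 1 (N - 2*k) = {x. 2*k < x \<and> x \<le> N}"
  proof
    show "h ` Sk 1 (N - 2*k) \<subseteq> {x. 2*k < x \<and> x \<le> N}"
      using N by (auto simp: h_def Sk_def)
    show "{x. 2*k < x \<and> x \<le> N} \<subseteq> h ` Sk 1 (N - 2*k)"
    proof
      fix x assume x: "x \<in> {x. 2*k < x \<and> x \<le> N}"
      show "x \<in> h ` Sk 1 (N - 2*k)"
      proof (cases "x = Suc (2*k)")
        case True
        then have "x = h 0" by (simp add: h_def)
        moreover have "0 \<in> Sk 1 (N - 2*k)" by (simp add: Sk_def)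
        ultimately show ?thesis by blast
      next
        case False
        have "x - 2*k \<in> Sk 1 (N - 2*k)" using x False unfolding Sk_def mem_Collect_eq by presburger
        moreover have "x = h (x - 2*k)" using x False by (auto simp: h_def)
        ultimately show ?thesis by blast
      qed
    qed
  qed
  have imgC: "h ` Ck 1 = {Suc (2*k)}" by (auto simp: h_def Ck_def)
  have "card (Dg (h ` Sk 1 (N - 2*k)) (h ` Ck 1)) = Hc 1 (N - 2*k)"
    unfolding Hc_def
  proof (rule iso)
    show "strict_mono_on (Sk 1 (N - 2 * k)) h"
      by (rule strict_mono_onI) (auto simp: h_def Sk_def)
    show "\<forall>j\<in>Sk 1 (N - 2 * k). (\<exists>i\<in>Sk 1 (N - 2 * k). i < j) \<longrightarrow> even (h j) = even j"
      by (auto simp: h_def)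
    show "Ck 1 \<subseteq> Sk 1 (N - 2 * k)" using N by (intro Ck_sub) simp
  qed
  then show ?thesis unfolding img imgC Dg_single .
qed

lemma head_iso:
  assumes N: "1 \<le> N"
  shows "card (Dg {x. 1 \<le> x \<and> x \<le> N} {}) = Hc 1 N"
proof -
  define h where "h y = (if y = 0 then 1 else y)" for y :: nat
  have img: "h ` Sk 1 N = {x. 1 \<le> x \<and> x \<le> N}"
  proof
    show "h ` Sk 1 N \<subseteq> {x. 1 \<le> x \<and> x \<le> N}" using N by (auto simp: h_def Sk_def)
    show "{x. 1 \<le> x \<and> x \<le> N} \<subseteq> h ` Sk 1 N"
    proof
      fix x assume x: "x \<in> {x. 1 \<le> x \<and> x \<le> N}"
      show "x \<in> h ` Sk 1 N"
      proof (cases "x = 1")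
        case True
        then have "x = h 0" by (simp add: h_def)
        moreover have "0 \<in> Sk 1 N" by (simp add: Sk_def)
        ultimately show ?thesis by blast
      next
        case False
        have "x \<in> Sk 1 N" using x False unfolding Sk_def mem_Collect_eq by presburger
        moreover have "x = h x" using x False by (auto simp: h_def)
        ultimately show ?thesis by blast
      qed
    qed
  qed
  have imgC: "h ` Ck 1 = {1}" by (auto simp: h_def Ck_def)
  have "card (Dg (h ` Sk 1 N) (h ` Ck 1)) = Hc 1 N"
    unfolding Hc_def
  proof (rule iso)
    show "strict_mono_on (Sk 1 N) h"
      by (rule strict_mono_onI) (auto simp: h_def Sk_def)
    show "\<forall>j\<in>Sk 1 N. (\<exists>i\<in>Sk 1 N. i < j) \<longrightarrow> even (h j) = even j"
      by (auto simp: h_def)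
    show "Ck 1 \<subseteq> Sk 1 N" using N by (intro Ck_sub) simp
  qed
  then show ?thesis unfolding img imgC Dg_single .
qed


lemma sum_tops:
  assumes "finite S" "T \<subseteq> S" "\<And>x. x \<in> S \<Longrightarrow> x \<notin> T \<Longrightarrow> g x = 0"
  shows "sum g S = sum g T"
  using sum.mono_neutral_right[OF assms(1,2)] assms(3) by blast

lemma Hc_A: "1 \<le> k \<Longrightarrow> Hc k (2*k - 1) = 1"
proof -
  assume k: "1 \<le> k"
  have "Sk k (2*k - 1) = Ck k" unfolding Sk_def Ck_def using k by (auto; presburger)
  then show ?thesis unfolding Hc_def using Dg_LL by simp
qed

lemma Hc_E: "Hc 0 0 = 1"
proof -
  have "Sk 0 0 = {0}" "Ck 0 = {}" by (auto simp: Sk_def Ck_def)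
  then show ?thesis unfolding Hc_def using Dg_LL[of "{0}"] Dg_single[of "{0}" 0] by simp
qed

lemma Hc_B:
  assumes k: "1 \<le> k"
  shows "Hc k (2*k) = Hc (k - 1) (2*k - 2) + 1"
proof -
  define S where "S = Sk k (2*k)"
  define C where "C = Ck k"
  have fin: "finite S" unfolding S_def by (rule Sk_finite)
  have ne: "S \<noteq> {}" "0 \<in> S" "2*k \<in> S" by (auto simp: S_def Sk_def)
  have CS: "C \<subseteq> S" unfolding C_def S_def by (intro Ck_sub) simp
  have T: "{0, 2*k} \<subseteq> S" using ne by auto
  have z: "TT S C x = 0" if "x \<in> S" "x \<notin> {0, 2*k}" for x
  proof (rule TT_zero1)
    show "x \<in> C" using that unfolding S_def Sk_def C_def Ck_def by (auto; presburger)
    show "0 \<in> C" using k by (simp add: C_def Ck_def)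
    show "0 < x" using that by simp
  qed
  have "Hc k (2*k) = (\<Sum>x\<in>S. TT S C x)" unfolding Hc_def S_def C_def
    by (rule card_Dg_sum) (use fin ne CS in \<open>auto simp: S_def C_def\<close>)
  also have "\<dots> = (\<Sum>x\<in>{0, 2*k}. TT S C x)" by (rule sum_tops[OF fin T z])
  also have "\<dots> = TT S C 0 + TT S C (2*k)" using k by simp
  also have "TT S C 0 = Hc (k - 1) (2*k - 2)" unfolding S_def C_def by (rule Hc_top0[OF k]) simp
  also have "TT S C (2*k) = card (Dg {x. 2*k < x \<and> x \<le> 2*k} {})" unfolding S_def C_def
    by (rule Hc_top2k[OF k]) simp
  also have "{x. 2*k < x \<and> x \<le> 2*k} = {}" by auto
  finally show ?thesis by (simp add: Dg_empty)
qed

lemma Hc_C: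
  assumes k: "1 \<le> k" and N: "Suc (2*k) \<le> N"
  shows "Hc k N = Hc (k - 1) (N - 2) + Hc 1 (N - 2*k) + Hc (Suc k) N"
proof -
  define S where "S = Sk k N"
  define C where "C = Ck k"
  have fin: "finite S" unfolding S_def by (rule Sk_finite)
  have ne: "S \<noteq> {}" "0 \<in> S" "2*k \<in> S" "Suc (2*k) \<in> S" using N by (auto simp: S_def Sk_def)
  have CS: "C \<subseteq> S" unfolding C_def S_def using N by (intro Ck_sub) simp
  have T: "{0, 2*k, Suc (2*k)} \<subseteq> S" using ne by auto
  have z: "TT S C x = 0" if x: "x \<in> S" "x \<notin> {0, 2*k, Suc (2*k)}" for x
  proof (cases "x < 2*k")
    case True
    show ?thesis
    proof (rule TT_zero1)
      show "x \<in> C" using x True unfolding S_def Sk_def C_def Ck_def by (auto; presburger)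
      show "0 \<in> C" using k by (simp add: C_def Ck_def)
      show "0 < x" using x by simp
    qed
  next
    case False
    then have "Suc (2*k) < x" using x by auto
    then show ?thesis using ne by (intro TT_zero2[of 0 S "Suc (2*k)"]) auto
  qed
  have "Hc k N = (\<Sum>x\<in>S. TT S C x)" unfolding Hc_def S_def C_def
    by (rule card_Dg_sum) (use fin ne CS in \<open>auto simp: S_def C_def\<close>)
  also have "\<dots> = (\<Sum>x\<in>{0, 2*k, Suc (2*k)}. TT S C x)" by (rule sum_tops[OF fin T z])
  also have "\<dots> = TT S C 0 + TT S C (2*k) + TT S C (Suc (2*k))" using k by simp
  also have "TT S C 0 = Hc (k - 1) (N - 2)" unfolding S_def C_def by (rule Hc_top0[OF k]) (use N in simp)
  also have "TT S C (2*k) = Hc 1 (N - 2*k)" unfolding S_def C_def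
    using Hc_top2k[OF k] tail_iso[OF N] N by simp
  also have "TT S C (Suc (2*k)) = Hc (Suc k) N" unfolding S_def C_def by (rule Hc_top2k1[OF N])
  finally show ?thesis .
qed

lemma Hc_D:
  assumes N: "1 \<le> N"
  shows "Hc 0 N = 2 * Hc 1 N"
proof -
  define S where "S = Sk 0 N"
  define C where "C = Ck 0"
  have fin: "finite S" unfolding S_def by (rule Sk_finite)
  have ne: "S \<noteq> {}" "0 \<in> S" "1 \<in> S" using N by (auto simp: S_def Sk_def)
  have C0: "C = {}" by (simp add: C_def Ck_def)
  have T: "{0, 1} \<subseteq> S" using ne by auto
  have z: "TT S C x = 0" if x: "x \<in> S" "x \<notin> {0, 1}" for x
    using x ne by (intro TT_zero2[of 0 S 1]) auto
  have "Hc 0 N = (\<Sum>x\<in>S. TT S C x)" unfolding Hc_def S_def C_def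
    by (rule card_Dg_sum) (use fin ne in \<open>auto simp: S_def C_def Ck_def\<close>)
  also have "\<dots> = (\<Sum>x\<in>{0, 1}. TT S C x)" by (rule sum_tops[OF fin T z])
  also have "\<dots> = TT S C 0 + TT S C 1" by simp
  also have "TT S C 0 = Hc 1 N"
  proof -
    have "S - {0} = {x. 1 \<le> x \<and> x \<le> N}" by (auto simp: S_def Sk_def)
    then have "TT S C 0 = card (Dg {x. 1 \<le> x \<and> x \<le> N} {})" unfolding TT_0 C0 by simp
    then show ?thesis using head_iso[OF N] by simp
  qed
  also have "TT S C 1 = Hc 1 N" unfolding S_def C_def using Hc_top2k1[of 0 N] N by simp
  finally show ?thesis by simp
qed


lemma Hc_FF: "2*k \<le> Suc N \<Longrightarrow> real (Hc k N) = FF k N"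
proof (induction N arbitrary: k rule: less_induct)
  case (less N)
  note outer = less.IH
  have "\<forall>k. Suc N - 2*k = d \<longrightarrow> 2*k \<le> Suc N \<longrightarrow> real (Hc k N) = FF k N" for d
  proof (induction d rule: less_induct)
    case (less d)
    note inner = less.IH
    show ?case
    proof (intro allI impI)
      fix k assume dk: "Suc N - 2*k = d" and kN: "2*k \<le> Suc N"
      show "real (Hc k N) = FF k N"
      proof (cases k)
        case 0
        show ?thesis
        proof (cases N)
          case 0 then show ?thesis using \<open>k = 0\<close> Hc_E FF_R4(1) by simp
        next
          case (Suc N')
          have "real (Hc 1 N) = FF 1 N" using inner[of "Suc N - 2"] Suc \<open>k = 0\<close> dk by auto
          then show ?thesis using \<open>k = 0\<close> Hc_D[of N] FF_R4(2)[of N] Suc by simp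
        qed
      next
        case (Suc k')
        consider "2*k = Suc N" | "2*k = N" | "Suc (2*k) \<le> N" using kN by linarith
        then show ?thesis
        proof cases
          case 1
          then have "N = 2*k - 1" by simp
          then show ?thesis using Hc_A[of k] FF_low[of N k] Suc 1 by simp
        next
          case 2
          have ih: "real (Hc k' (2*k')) = FF k' (2*k')" using outer[of "2*k'"] 2 Suc by simp
          have "Hc k N = Hc k' (2*k') + 1" using Hc_B[of k] 2 Suc by simp
          then show ?thesis using ih FF_R2[of k'] 2 Suc by simp
        next
          case 3
          have ih1: "real (Hc k' (N - 2)) = FF k' (N - 2)" using outer[of "N - 2" k'] 3 Suc by simp
          have ih2: "real (Hc 1 (N - 2*k)) = FF 1 (N - 2*k)" using outer[of "N - 2*k" 1] 3 Suc by simp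
          have ih3: "real (Hc (Suc k) N) = FF (Suc k) N" using inner[of "Suc N - 2*Suc k"] 3 dk by auto
          have "Hc k N = Hc k' (N - 2) + Hc 1 (N - 2*k) + Hc (Suc k) N" using Hc_C[of k N] 3 Suc by simp
          then show ?thesis using ih1 ih2 ih3 FF_R3[of k' N] 3 Suc by simp
        qed
      qed
    qed
  qed
  then show ?case using less.prems by blast
qed

lemma DX_eq: "D_X n (A_set n) = Dg {x. 1 \<le> x \<and> x \<le> n} {}"
proof -
  have S: "{1..n} = {x. 1 \<le> x \<and> x \<le> n}" by auto
  have "q \<in> D_X n (A_set n) \<longleftrightarrow> q \<in> Dg {1..n} {}" for q
  proof (cases "linear_order_on {1..n} q")
    case False then show ?thesis by (simp add: D_X_def Dg_def)
  next
    case lin: True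
    have nt: "(b,a) \<notin> q \<longleftrightarrow> (a,b) \<in> q" if "a \<in> {1..n}" "b \<in> {1..n}" "a \<noteq> b" for a b
      using lin_total[OF lin that] lin_antisym[OF lin] that by blast
    have rl: "ranked_last q i {i,j,k} \<longleftrightarrow> (j,i) \<in> q \<and> (k,i) \<in> q" if "i \<in> {1..n}" for i j k
      using lin_refl[OF lin that] by (auto simp: ranked_last_def)
    have rf: "ranked_first q k {i,j,k} \<longleftrightarrow> (k,i) \<in> q \<and> (k,j) \<in> q" if "k \<in> {1..n}" for i j k
      using lin_refl[OF lin that] by (auto simp: ranked_first_def)
    have A: "j \<in> A_set n \<longleftrightarrow> even j" if "1 \<le> i" "i < j" "j < k" "k \<le> n" for i j k
      using that by (auto simp: A_set_def)
    have cond: "((j \<in> A_set n \<longrightarrow> \<not> ranked_last q i {i, j, k}) \<and> (j \<notin> A_set n \<longrightarrow> \<not> ranked_first q k {i, j, k}))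
        \<longleftrightarrow> ((even j \<longrightarrow> (i,j) \<in> q \<or> (i,k) \<in> q) \<and> (odd j \<longrightarrow> (i,k) \<in> q \<or> (j,k) \<in> q))"
      if "1 \<le> i" "i < j" "j < k" "k \<le> n" for i j k
    proof -
      have m: "i \<in> {1..n}" "j \<in> {1..n}" "k \<in> {1..n}" using that by auto
      show ?thesis unfolding A[OF that] rl[OF m(1)] rf[OF m(3)]
        using nt[of i j] nt[of i k] nt[of j k] m that by auto
    qed
    have "(\<forall>i j k. 1 \<le> i \<and> i < j \<and> j < k \<and> k \<le> n \<longrightarrow>
        (j \<in> A_set n \<longrightarrow> \<not> ranked_last q i {i, j, k}) \<and> (j \<notin> A_set n \<longrightarrow> \<not> ranked_first q k {i, j, k}))
      \<longleftrightarrow> good {1..n} q"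
    proof
      assume h: "\<forall>i j k. 1 \<le> i \<and> i < j \<and> j < k \<and> k \<le> n \<longrightarrow>
        (j \<in> A_set n \<longrightarrow> \<not> ranked_last q i {i, j, k}) \<and> (j \<notin> A_set n \<longrightarrow> \<not> ranked_first q k {i, j, k})"
      show "good {1..n} q" unfolding good_def
      proof (intro ballI impI)
        fix i j k assume ijk: "i \<in> {1..n}" "j \<in> {1..n}" "k \<in> {1..n}" "i < j" "j < k"
        then have c: "1 \<le> i" "i < j" "j < k" "k \<le> n" by auto
        show "(even j \<longrightarrow> (i,j) \<in> q \<or> (i,k) \<in> q) \<and> (odd j \<longrightarrow> (i,k) \<in> q \<or> (j,k) \<in> q)"
          using h[rule_format, OF conjI[OF c(1) conjI[OF c(2) conjI[OF c(3) c(4)]]]] cond[OF c] by blast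
      qed
    next
      assume g: "good {1..n} q"
      show "\<forall>i j k. 1 \<le> i \<and> i < j \<and> j < k \<and> k \<le> n \<longrightarrow>
        (j \<in> A_set n \<longrightarrow> \<not> ranked_last q i {i, j, k}) \<and> (j \<notin> A_set n \<longrightarrow> \<not> ranked_first q k {i, j, k})"
      proof (intro allI impI)
        fix i j k assume "1 \<le> i \<and> i < j \<and> j < k \<and> k \<le> n"
        then have c: "1 \<le> i" "i < j" "j < k" "k \<le> n" by auto
        then have m: "i \<in> {1..n}" "j \<in> {1..n}" "k \<in> {1..n}" by auto
        have "(even j \<longrightarrow> (i,j) \<in> q \<or> (i,k) \<in> q) \<and> (odd j \<longrightarrow> (i,k) \<in> q \<or> (j,k) \<in> q)"
          using g m c(2,3) unfolding good_def by blast
        then show "(j \<in> A_set n \<longrightarrow> \<not> ranked_last q i {i, j, k}) \<and> (j \<notin> A_set n \<longrightarrow> \<not> ranked_first q k {i, j, k})"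
          using cond[OF c] by blast
      qed
    qed
    then show ?thesis using lin by (simp add: D_X_def Dg_def srt_def)
  qed
  then show ?thesis unfolding S[symmetric] by blast
qed

lemma a_count_FF: "1 \<le> n \<Longrightarrow> real (a_count n) = FF 1 n"
proof -
  assume n: "1 \<le> n"
  have "a_count n = Hc 1 n" unfolding a_count_def DX_eq using head_iso[OF n] .
  then show ?thesis using Hc_FF[of 1 n] n by simp
qed

lemma a_count_even: "m \<ge> 1 \<Longrightarrow> real (a_count (2*m)) = bb m"
proof -
  assume m: "m \<ge> 1"
  have "real (a_count (2*m)) = FF 1 (2*m)" using a_count_FF[of "2*m"] m by simp
  also have "\<dots> = uu 1 (m - 1)" using FF_even[of 1 m] m by simp
  also have "\<dots> = bb m" using uu_1[of "m - 1"] m by simp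
  finally show ?thesis .
qed

lemma a_count_odd: "m \<ge> 1 \<Longrightarrow> real (a_count (2*m+1)) = 2 * bb m"
proof -
  assume m: "m \<ge> 1"
  have "real (a_count (2*m+1)) = FF 1 (Suc (2*m))" using a_count_FF[of "2*m+1"] by simp
  also have "\<dots> = 2 * uu 1 (m - 1)" using FF_odd[of 1 m] m by simp
  also have "\<dots> = 2 * bb m" using uu_1[of "m - 1"] m by simp
  finally show ?thesis .
qed




lemma final_asym:
  shows "(\<lambda>m. real (a_count (2 * m))) \<sim>[at_top]
           (\<lambda>m. sqrt 2 / 4 * sqrt (2 + 2 * sqrt 2) ^ (2 * m)) \<and>
         (\<lambda>m. real (a_count (2 * m + 1))) \<sim>[at_top]
           (\<lambda>m. sqrt (sqrt 2 - 1) / 2 * sqrt (2 + 2 * sqrt 2) ^ (2 * m + 1))"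
proof -
  define r where "r = 2 + 2 * sqrt (2::real)"
  have rpos: "r > 0" unfolding r_def by (simp add: add_pos_nonneg)
  have rx: "r * x0 = 1"
  proof -
    define w where "w = sqrt (2::real)"
    have w2: "w * w = 2" unfolding w_def by simp
    have "r * x0 = w * w - 1" unfolding r_def x0_def w_def[symmetric] by (simp add: field_simps)
    then show ?thesis using w2 by simp
  qed
  have sq: "sqrt (2 + 2 * sqrt 2) ^ (2 * m) = r ^ m" for m
    unfolding r_def power_mult by (simp add: add_nonneg_nonneg)
  have sq2: "sqrt (sqrt 2 - 1) / 2 * sqrt (2 + 2 * sqrt 2) ^ (2 * m + 1) = sqrt 2 / 2 * r ^ m" for m
  proof -
    have "sqrt (sqrt 2 - 1) * sqrt (2 + 2 * sqrt 2) = sqrt ((sqrt 2 - 1) * (2 + 2 * sqrt 2))"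
      by (simp add: real_sqrt_mult)
    also have "(sqrt 2 - 1) * (2 + 2 * sqrt 2) = (2::real)" by (simp add: algebra_simps)
    finally have e: "sqrt (sqrt 2 - 1) * sqrt (2 + 2 * sqrt 2) = sqrt 2" .
    have "sqrt (sqrt 2 - 1) / 2 * sqrt (2 + 2 * sqrt 2) ^ (2 * m + 1)
          = (sqrt (sqrt 2 - 1) * sqrt (2 + 2 * sqrt 2)) / 2 * sqrt (2 + 2 * sqrt 2) ^ (2 * m)"
      by simp
    also have "\<dots> = sqrt 2 / 2 * r ^ m" unfolding e sq ..
    finally show ?thesis .
  qed
  have xr: "x0 ^ m * r ^ m = 1" for m by (metis power_mult_distrib rx mult.commute power_one)
  have L: "(\<lambda>m. bb m * x0^m / (sqrt 2 / 4)) \<longlonglongrightarrow> 1"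
  proof -
    have "(\<lambda>m. bb m * x0^m / (sqrt 2 / 4)) \<longlonglongrightarrow> (sqrt 2 / 4) / (sqrt 2 / 4)"
      by (intro tendsto_divide bb_lim tendsto_const) simp
    then show ?thesis by simp
  qed
  have r1: "real (a_count (2 * m)) / (sqrt 2 / 4 * sqrt (2 + 2 * sqrt 2) ^ (2 * m)) = bb m * x0^m / (sqrt 2 / 4)"
    if "m \<ge> 1" for m
  proof -
    have "real (a_count (2 * m)) / (sqrt 2 / 4 * sqrt (2 + 2 * sqrt 2) ^ (2 * m)) = bb m / (sqrt 2 / 4 * r^m)"
      using a_count_even[OF that] sq by simp
    also have "\<dots> = bb m * (x0^m * r^m) / (sqrt 2 / 4 * r^m)" using xr by simp
    also have "\<dots> = bb m * x0^m / (sqrt 2 / 4)" using rpos by (simp add: field_simps)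
    finally show ?thesis .
  qed
  have r2: "real (a_count (2 * m + 1)) / (sqrt (sqrt 2 - 1) / 2 * sqrt (2 + 2 * sqrt 2) ^ (2 * m + 1)) = bb m * x0^m / (sqrt 2 / 4)"
    if "m \<ge> 1" for m
  proof -
    have "real (a_count (2 * m + 1)) / (sqrt (sqrt 2 - 1) / 2 * sqrt (2 + 2 * sqrt 2) ^ (2 * m + 1)) = 2 * bb m / (sqrt 2 / 2 * r^m)"
      using a_count_odd[OF that] sq2 by simp
    also have "\<dots> = bb m * (x0^m * r^m) / (sqrt 2 / 4 * r^m)" using xr by simp
    also have "\<dots> = bb m * x0^m / (sqrt 2 / 4)" using rpos by (simp add: field_simps)
    finally show ?thesis .
  qed
  show ?thesis
  proof
    show "(\<lambda>m. real (a_count (2 * m))) \<sim>[at_top] (\<lambda>m. sqrt 2 / 4 * sqrt (2 + 2 * sqrt 2) ^ (2 * m))"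
    proof (rule asymp_equivI')
      show "((\<lambda>m. real (a_count (2 * m)) / (sqrt 2 / 4 * sqrt (2 + 2 * sqrt 2) ^ (2 * m))) \<longlongrightarrow> 1) at_top"
      proof -
        have ev: "\<forall>\<^sub>F m in at_top. bb m * x0^m / (sqrt 2 / 4) = real (a_count (2 * m)) / (sqrt 2 / 4 * sqrt (2 + 2 * sqrt 2) ^ (2 * m))"
          unfolding eventually_at_top_linorder by (intro exI[of _ 1] allI impI, rule r1[symmetric])
        show ?thesis using tendsto_cong[OF ev] L by simp
      qed
    qed
    show "(\<lambda>m. real (a_count (2 * m + 1))) \<sim>[at_top] (\<lambda>m. sqrt (sqrt 2 - 1) / 2 * sqrt (2 + 2 * sqrt 2) ^ (2 * m + 1))"
    proof (rule asymp_equivI')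
      show "((\<lambda>m. real (a_count (2 * m + 1)) / (sqrt (sqrt 2 - 1) / 2 * sqrt (2 + 2 * sqrt 2) ^ (2 * m + 1))) \<longlongrightarrow> 1) at_top"
      proof -
        have ev: "\<forall>\<^sub>F m in at_top. bb m * x0^m / (sqrt 2 / 4) = real (a_count (2 * m + 1)) / (sqrt (sqrt 2 - 1) / 2 * sqrt (2 + 2 * sqrt 2) ^ (2 * m + 1))"
          unfolding eventually_at_top_linorder by (intro exI[of _ 1] allI impI, rule r2[symmetric])
        show ?thesis using tendsto_cong[OF ev] L by simp
      qed
    qed
  qed
qed


theorem proposition10:
  shows "(\<lambda>m. real (a_count (2 * m))) \<sim>[at_top]
           (\<lambda>m. sqrt 2 / 4 * sqrt (2 + 2 * sqrt 2) ^ (2 * m)) \<and>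
         (\<lambda>m. real (a_count (2 * m + 1))) \<sim>[at_top]
           (\<lambda>m. sqrt (sqrt 2 - 1) / 2 * sqrt (2 + 2 * sqrt 2) ^ (2 * m + 1))"
  by (rule final_asym)

end
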